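(* Consider the cascade model with $N=2$ processors, rates $\lambda_1,\lambda_2>0$ and $\beta_{12}>0$, started from a fixed initial state, and its embedded chain $Y(n)=x_2(\tau_n)-x_1(\tau_n)$. If $\lambda_1<\lambda_2$, then the Markov chain $Y(n)$ is ergodic and $x_1(t)/t\to\lambda_1$ and $x_2(t)/t\to\lambda_1$ in probability as $t\to\infty$. If $\lambda_1>\lambda_2$, then the Markov chain $Y(n)$ is transient and $x_1(t)/t\to\lambda_1$, $x_2(t)/t\to\lambda_2$ in probability as $t\to\infty$.
   Context: Cascade model with $N=2$: processes $x_1(t),x_2(t)\in\mathbb Z$; independent Poisson flows $\Pi^1,\Pi^2,\Pi^{12}$ of intensities $\lambda_1,\lambda_2,\beta_{12}$. At points of $\Pi^k$, $x_k$ increases by $1$; at points $\sigma$ of $\Pi^{12}$, processor $1$ sends a message with value $x_1(\sigma)$ to processor $2$, and if $x_2(\sigma)>x_1(\sigma)$ then $x_2$ is reset to $x_1(\sigma)$. Let $0=\tau_0<\tau_1<\dots$ be the successive points of the union of all three flows. With $Z=\lambda_1+\lambda_2+\beta_{12}$, the embedded chain $Y(n)$ on $\mathbb Z$ has transition probabilities $p_{i,i+1}=\lambda_2/Z$, $p_{i,i-1}=\lambda_1/Z$, $p_{i,0}=\beta_{12}/Z$ for $i>0$, $p_{i,i}=\beta_{12}/Z$ for $i\le 0$ (so $p_{0,0}=\beta_{12}/Z$), and all other transitions have probability $0$. *)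

theory Defs
  imports "HOL-Probability.Probability"
begin

fun traj :: "('s \<Rightarrow> 's pmf) \<Rightarrow> nat \<Rightarrow> 's \<Rightarrow> 's list pmf" where
  "traj K 0 i = return_pmf [i]"
| "traj K (Suc n) i = bind_pmf (K i) (\<lambda>j. map_pmf (\<lambda>xs. i # xs) (traj K n j))"

definition pstep :: "('s \<Rightarrow> 's pmf) \<Rightarrow> nat \<Rightarrow> 's \<Rightarrow> 's \<Rightarrow> real" where
  "pstep K n i j = measure_pmf.prob (traj K n i) {xs. last xs = j}"

definition return_by :: "('s \<Rightarrow> 's pmf) \<Rightarrow> nat \<Rightarrow> 's \<Rightarrow> real" where
  "return_by K n i = measure_pmf.prob (traj K n i) {xs. \<exists>k\<in>{1..n}. xs ! k = i}"

definition return_prob :: "('s \<Rightarrow> 's pmf) \<Rightarrow> 's \<Rightarrow> real" where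
  "return_prob K i = (SUP n. return_by K n i)"

definition recurrent_state :: "('s \<Rightarrow> 's pmf) \<Rightarrow> 's \<Rightarrow> bool" where
  "recurrent_state K i \<longleftrightarrow> return_prob K i = 1"

definition transient_state :: "('s \<Rightarrow> 's pmf) \<Rightarrow> 's \<Rightarrow> bool" where
  "transient_state K i \<longleftrightarrow> return_prob K i < 1"

text \<open>Positive recurrence: recurrent with finite mean return time
  E[T_i] = sum over n of P(T_i > n) = sum over n of (1 - P(T_i \<le> n)).\<close>
definition positive_recurrent_state :: "('s \<Rightarrow> 's pmf) \<Rightarrow> 's \<Rightarrow> bool" where
  "positive_recurrent_state K i \<longleftrightarrow>
     recurrent_state K i \<and> summable (\<lambda>n. 1 - return_by K n i)"

definition irreducible_chain :: "('s \<Rightarrow> 's pmf) \<Rightarrow> bool" where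
  "irreducible_chain K \<longleftrightarrow> (\<forall>i j. \<exists>n. pstep K n i j > 0)"

definition aperiodic_chain :: "('s \<Rightarrow> 's pmf) \<Rightarrow> bool" where
  "aperiodic_chain K \<longleftrightarrow> (\<forall>i. Gcd {n. n > 0 \<and> pstep K n i i > 0} = 1)"

definition ergodic_chain :: "('s \<Rightarrow> 's pmf) \<Rightarrow> bool" where
  "ergodic_chain K \<longleftrightarrow> irreducible_chain K \<and> aperiodic_chain K \<and>
                         (\<forall>i. positive_recurrent_state K i)"

definition transient_chain :: "('s \<Rightarrow> 's pmf) \<Rightarrow> bool" where
  "transient_chain K \<longleftrightarrow> (\<forall>i. transient_state K i)"

definition Y_trans :: "real \<Rightarrow> real \<Rightarrow> real \<Rightarrow> int \<Rightarrow> int \<Rightarrow> real" where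
  "Y_trans l1 l2 b i j =
     (let Z = l1 + l2 + b in
      (if j = i + 1 then l2 / Z else 0)
    + (if j = i - 1 then l1 / Z else 0)
    + (if i > 0 \<and> j = 0 then b / Z else 0)
    + (if i \<le> 0 \<and> j = i then b / Z else 0))"

definition Y_kernel :: "real \<Rightarrow> real \<Rightarrow> real \<Rightarrow> int \<Rightarrow> int pmf" where
  "Y_kernel l1 l2 b i = embed_pmf (Y_trans l1 l2 b i)"

text \<open>Flows are indexed 0 (= Pi^1), 1 (= Pi^2), 2 (= Pi^12).  Flow k is given by its
  i.i.d. exponential inter-arrival times G k 0, G k 1, ...; its n-th point (n = 0,1,...)
  is G k 0 + ... + G k n.\<close>
definition flow_rate :: "real \<Rightarrow> real \<Rightarrow> real \<Rightarrow> nat \<Rightarrow> real" where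
  "flow_rate l1 l2 b k = (if k = 0 then l1 else if k = 1 then l2 else b)"

definition flow_point :: "(nat \<Rightarrow> nat \<Rightarrow> real) \<Rightarrow> nat \<Rightarrow> nat \<Rightarrow> real" where
  "flow_point G k n = (\<Sum>m\<le>n. G k m)"

text \<open>All points (time, flow index) of the three flows in [0,t], in chronological order (simultaneous points, a null event, in unspecified order).\<close>
definition events_upto :: "(nat \<Rightarrow> nat \<Rightarrow> real) \<Rightarrow> real \<Rightarrow> (real \<times> nat) list" where
  "events_upto G t = sorted_key_list_of_set fst {(flow_point G k n, k) | k n. k < 3 \<and> flow_point G k n \<le> t}"

definition cascade_step :: "int \<times> int \<Rightarrow> nat \<Rightarrow> int \<times> int" where
  "cascade_step x k =
     (if k = 0 then (fst x + 1, snd x)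
      else if k = 1 then (fst x, snd x + 1)
      else (fst x, (if snd x > fst x then fst x else snd x)))"

definition cascade_state :: "int \<times> int \<Rightarrow> (nat \<Rightarrow> nat \<Rightarrow> real) \<Rightarrow> real \<Rightarrow> int \<times> int" where
  "cascade_state x0 G t = foldl (\<lambda>x e. cascade_step x (snd e)) x0 (events_upto G t)"

text \<open>Outer probability, so that no measurability of the events needs to be presupposed.\<close>
definition outer_prob :: "'a measure \<Rightarrow> 'a set \<Rightarrow> real" where
  "outer_prob M A = (INF B\<in>{B \<in> sets M. A \<inter> space M \<subseteq> B}. measure M B)"

definition conv_in_prob :: "'a measure \<Rightarrow> (real \<Rightarrow> 'a \<Rightarrow> real) \<Rightarrow> real \<Rightarrow> bool" where
  "conv_in_prob M X c \<longleftrightarrow>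
     (\<forall>\<epsilon>>0. ((\<lambda>t. outer_prob M {\<omega> \<in> space M. \<bar>X t \<omega> - c\<bar> > \<epsilon>}) \<longlongrightarrow> 0) at_top)"

end

theory Submission
  imports Defs
begin

lemma sum_filter_list_aux:
  fixes f :: "'a \<Rightarrow> real"
  assumes "finite B" "set (map fst xs) \<subseteq> B"
  shows "(\<Sum>a\<in>B. f a * sum_list (map snd (filter (\<lambda>z. fst z = a) xs)))
         = sum_list (map (\<lambda>z. snd z * f (fst z)) xs)"
  using assms(2)
proof (induction xs)
  case Nil then show ?case by simp
next
  case (Cons z xs)
  have "(\<Sum>a\<in>B. f a * sum_list (map snd (filter (\<lambda>z. fst z = a) (z#xs))))
      = (\<Sum>a\<in>B. (if fst z = a then snd z * f (fst z) else 0))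
        + (\<Sum>a\<in>B. f a * sum_list (map snd (filter (\<lambda>z. fst z = a) xs)))"
    by (subst sum.distrib[symmetric], rule sum.cong) (auto simp: algebra_simps)
  also have "(\<Sum>a\<in>B. (if fst z = a then snd z * f (fst z) else 0)) = snd z * f (fst z)"
    using Cons.prems assms(1) by (simp add: sum.delta)
  finally show ?case using Cons by simp
qed

lemma expectation_pmf_of_list:
  fixes f :: "'a \<Rightarrow> real"
  assumes "pmf_of_list_wf xs"
  shows "measure_pmf.expectation (pmf_of_list xs) f = sum_list (map (\<lambda>z. snd z * f (fst z)) xs)"
proof -
  have "measure_pmf.expectation (pmf_of_list xs) f = (\<Sum>a\<in>set (map fst xs). f a * pmf (pmf_of_list xs) a)"
    using set_pmf_of_list[OF assms] by (intro integral_measure_pmf_real) auto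
  also have "\<dots> = sum_list (map (\<lambda>z. snd z * f (fst z)) xs)"
    by (simp add: pmf_pmf_of_list[OF assms] sum_filter_list_aux del: set_map)
  finally show ?thesis .
qed

lemma measure_bind_pmf':
  "measure_pmf.prob (bind_pmf M N) X = measure_pmf.expectation M (\<lambda>x. measure_pmf.prob (N x) X)"
proof -
  have "ennreal (measure_pmf.prob (bind_pmf M N) X) = emeasure (bind_pmf M N) X"
    by (simp add: measure_pmf.emeasure_eq_measure)
  also have "\<dots> = (\<integral>\<^sup>+x. emeasure (N x) X \<partial>M)"
    by simp
  also have "\<dots> = (\<integral>\<^sup>+x. ennreal (measure_pmf.prob (N x) X) \<partial>M)"
    by (simp add: measure_pmf.emeasure_eq_measure)
  also have "\<dots> = ennreal (\<integral>x. measure_pmf.prob (N x) X \<partial>M)"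
    by (rule nn_integral_eq_integral)
       (auto intro!: measure_pmf.integrable_const_bound[where B=1])
  finally show ?thesis by (simp add: integral_nonneg_AE)
qed

lemma traj_set:
  "xs \<in> set_pmf (traj K n i) \<Longrightarrow> length xs = Suc n \<and> xs ! 0 = i"
  by (induction n arbitrary: i xs) auto

lemma prob_traj_Suc:
  "measure_pmf.prob (traj K (Suc n) i) A
   = measure_pmf.expectation (K i) (\<lambda>j. measure_pmf.prob (traj K n j) ((#) i -` A))"
  by (simp add: measure_bind_pmf')

lemma prob_traj_cong:
  assumes "\<And>xs. xs \<in> set_pmf (traj K n i) \<Longrightarrow> xs \<in> A \<longleftrightarrow> xs \<in> B"
  shows "measure_pmf.prob (traj K n i) A = measure_pmf.prob (traj K n i) B"
proof -
  have "A \<inter> set_pmf (traj K n i) = B \<inter> set_pmf (traj K n i)" using assms by blast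
  then show ?thesis by (metis measure_Int_set_pmf)
qed

definition sY :: "int \<Rightarrow> int" where "sY i = (if i > 0 then 0 else i)"

lemma Y_kernel_eq:
  "Y_kernel l1 l2 b i = pmf_of_list [(i-1, l1/(l1+l2+b)), (i+1, l2/(l1+l2+b)), (sY i, b/(l1+l2+b))]"
  unfolding Y_kernel_def pmf_of_list_def
  apply (rule arg_cong[where f=embed_pmf], rule ext)
  subgoal for j
    by (cases "i > 0"; cases "j = i+1"; cases "j = i - 1"; cases "j = 0"; cases "j = i")
       (simp_all add: Y_trans_def sY_def Let_def)
  done

context
  fixes l1 l2 b :: real
  assumes l1: "l1 > 0" and l2: "l2 > 0" and b: "b > 0"
begin

lemma Y_wf: "pmf_of_list_wf [(i-1, l1/(l1+l2+b)), (i+1, l2/(l1+l2+b)), (sY i, b/(l1+l2+b))]"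
  using l1 l2 b by (intro pmf_of_list_wfI) (auto simp: add_divide_distrib[symmetric])

lemma E_K:
  "measure_pmf.expectation (Y_kernel l1 l2 b i) f
   = l1/(l1+l2+b) * f (i-1) + l2/(l1+l2+b) * f (i+1) + b/(l1+l2+b) * f (sY i)"
  unfolding Y_kernel_eq by (subst expectation_pmf_of_list[OF Y_wf]) simp

lemma set_K: "set_pmf (Y_kernel l1 l2 b i) \<subseteq> {i-1, i+1, sY i}"
  unfolding Y_kernel_eq using set_pmf_of_list[OF Y_wf] by auto

lemma finite_K: "finite (set_pmf (Y_kernel l1 l2 b i))"
  using set_K by (rule finite_subset) auto

lemma pmf_K: "pmf (Y_kernel l1 l2 b i) j = Y_trans l1 l2 b i j"
proof -
  have "pmf (Y_kernel l1 l2 b i) j = sum_list (map snd (filter (\<lambda>z. fst z = j)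
     [(i-1, l1/(l1+l2+b)), (i+1, l2/(l1+l2+b)), (sY i, b/(l1+l2+b))]))"
    unfolding Y_kernel_eq by (rule pmf_pmf_of_list[OF Y_wf])
  then show ?thesis
    by (cases "i > 0"; cases "j = i+1"; cases "j = i - 1"; cases "j = 0"; cases "j = i")
       (simp_all add: Y_trans_def sY_def Let_def)
qed

lemma K_up: "i+1 \<in> set_pmf (Y_kernel l1 l2 b i)"
proof -
  have Z: "l1+l2+b > 0" using l1 l2 b by simp
  have "Y_trans l1 l2 b i (i+1) \<ge> l2/(l1+l2+b)"
    unfolding Y_trans_def Let_def using Z l1 b by (auto intro!: add_nonneg_nonneg)
  moreover have "l2/(l1+l2+b) > 0" using Z l2 by simp
  ultimately show ?thesis by (simp add: set_pmf_iff pmf_K)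
qed
lemma K_down: "i-1 \<in> set_pmf (Y_kernel l1 l2 b i)"
proof -
  have Z: "l1+l2+b > 0" using l1 l2 b by simp
  have "Y_trans l1 l2 b i (i-1) \<ge> l1/(l1+l2+b)"
    unfolding Y_trans_def Let_def using Z l2 b by (auto intro!: add_nonneg_nonneg)
  moreover have "l1/(l1+l2+b) > 0" using Z l1 by simp
  ultimately show ?thesis by (simp add: set_pmf_iff pmf_K)
qed
lemma K_s: "sY i \<in> set_pmf (Y_kernel l1 l2 b i)"
proof -
  have Z: "l1+l2+b > 0" using l1 l2 b by simp
  have "Y_trans l1 l2 b i (sY i) \<ge> b/(l1+l2+b)"
    unfolding Y_trans_def Let_def sY_def using Z l1 l2 by (auto intro!: add_nonneg_nonneg)
  moreover have "b/(l1+l2+b) > 0" using Z b by simp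
  ultimately show ?thesis by (simp add: set_pmf_iff pmf_K)
qed

end

definition reachable :: "('s \<Rightarrow> 's pmf) \<Rightarrow> nat \<Rightarrow> 's \<Rightarrow> 's \<Rightarrow> bool" where
  "reachable K n i j \<longleftrightarrow> (\<exists>xs\<in>set_pmf (traj K n i). last xs = j)"

lemma pstep_pos: "reachable K n i j \<Longrightarrow> pstep K n i j > 0"
  unfolding reachable_def pstep_def by (auto intro: measure_pmf_posI)

lemma reach_0: "reachable K 0 i i"
  by (simp add: reachable_def)

lemma reach_step: "j \<in> set_pmf (K i) \<Longrightarrow> reachable K n j k \<Longrightarrow> reachable K (Suc n) i k"
  unfolding reachable_def
proof -
  assume j: "j \<in> set_pmf (K i)" and "\<exists>xs\<in>set_pmf (traj K n j). last xs = k"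
  then obtain xs where xs: "xs \<in> set_pmf (traj K n j)" "last xs = k" by blast
  then have "xs \<noteq> []" using traj_set[OF xs(1)] by auto
  then show "\<exists>xs\<in>set_pmf (traj K (Suc n) i). last xs = k"
    using j xs by (intro bexI[of _ "i # xs"]) auto
qed

lemma reach_trans: "reachable K m i j \<Longrightarrow> reachable K n j k \<Longrightarrow> reachable K (m+n) i k"
proof (induction m arbitrary: i)
  case 0
  then show ?case by (auto simp: reachable_def)
next
  case (Suc m)
  from Suc.prems(1) obtain xs where xs: "xs \<in> set_pmf (traj K (Suc m) i)" "last xs = j"
    unfolding reachable_def by blast
  then obtain j' ys where j': "j' \<in> set_pmf (K i)" "ys \<in> set_pmf (traj K m j')" "xs = i # ys"
    by auto
  have "ys \<noteq> []" using traj_set[OF j'(2)] by auto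
  then have "reachable K m j' j" using j' xs unfolding reachable_def by auto
  from Suc.IH[OF this Suc.prems(2)] have "reachable K (m+n) j' k" .
  then show ?case using reach_step[of j' K i "m+n" k] j'(1) by simp
qed

definition avoid :: "('s \<Rightarrow> 's pmf) \<Rightarrow> nat \<Rightarrow> 's \<Rightarrow> 's \<Rightarrow> real" where
  "avoid K n j i = measure_pmf.prob (traj K n j) {xs. \<forall>k\<in>{0..n}. xs ! k \<noteq> i}"

lemma all_Suc_split: "(\<forall>k\<in>{0..Suc n}. P k) \<longleftrightarrow> P 0 \<and> (\<forall>k\<in>{0..n}. P (Suc k))"
  by (auto, case_tac k, auto)

lemma all_Suc_split1: "(\<forall>k\<in>{1..Suc n}. P k) \<longleftrightarrow> (\<forall>k\<in>{0..n}. P (Suc k))"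
  by (auto, case_tac k, auto)

lemma ex_Suc_split1: "(\<exists>k\<in>{1..Suc n}. P k) \<longleftrightarrow> (\<exists>k\<in>{0..n}. P (Suc k))"
  by (auto, case_tac k, auto)

lemma avoid_0: "avoid K 0 j i = (if j = i then 0 else 1)"
  by (simp add: avoid_def)

lemma avoid_Suc:
  "avoid K (Suc n) j i = (if j = i then 0 else measure_pmf.expectation (K j) (\<lambda>j'. avoid K n j' i))"
proof -
  have "avoid K (Suc n) j i = measure_pmf.expectation (K j)
          (\<lambda>j'. measure_pmf.prob (traj K n j') ((#) j -` {xs. \<forall>k\<in>{0..Suc n}. xs ! k \<noteq> i}))"
    unfolding avoid_def by (rule prob_traj_Suc)
  also have "((#) j -` {xs. \<forall>k\<in>{0..Suc n}. xs ! k \<noteq> i})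
      = (if j = i then {} else {xs. \<forall>k\<in>{0..n}. xs ! k \<noteq> i})"
    by (auto simp: all_Suc_split)
  finally show ?thesis by (simp add: avoid_def)
qed

lemma avoid_self: "avoid K n i i = 0"
  by (cases n) (simp_all add: avoid_0 avoid_Suc)

lemma avoid_nonneg: "0 \<le> avoid K n j i" by (simp add: avoid_def)
lemma avoid_le1: "avoid K n j i \<le> 1" by (simp add: avoid_def)

lemma return_by_0: "return_by K 0 i = 0"
  by (simp add: return_by_def)

lemma return_by_Suc:
  "1 - return_by K (Suc n) i = measure_pmf.expectation (K i) (\<lambda>j. avoid K n j i)"
proof -
  have "1 - return_by K (Suc n) i = measure_pmf.prob (traj K (Suc n) i) (UNIV - {xs. \<exists>k\<in>{1..Suc n}. xs ! k = i})"
    unfolding return_by_def using measure_pmf.prob_compl[of "{xs. \<exists>k\<in>{1..Suc n}. xs ! k = i}" "traj K (Suc n) i"] by simp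
  also have "\<dots> = measure_pmf.expectation (K i)
          (\<lambda>j. measure_pmf.prob (traj K n j) ((#) i -` (UNIV - {xs. \<exists>k\<in>{1..Suc n}. xs ! k = i})))"
    by (rule prob_traj_Suc)
  also have "((#) i -` (UNIV - {xs. \<exists>k\<in>{1..Suc n}. xs ! k = i})) = {xs. \<forall>k\<in>{0..n}. xs ! k \<noteq> i}"
    by (rule set_eqI) (simp only: vimage_def mem_Collect_eq Diff_iff UNIV_I ex_Suc_split1 nth_Cons_Suc, blast)
  finally show ?thesis by (simp add: avoid_def)
qed

lemma return_by_le1: "return_by K n i \<le> 1" by (simp add: return_by_def)
lemma return_by_nonneg: "0 \<le> return_by K n i" by (simp add: return_by_def)

lemma lyap_pos_rec:
  fixes V :: "'s \<Rightarrow> real"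
  assumes fin: "\<And>j. finite (set_pmf (K j))"
    and Vnn: "\<And>j. V j \<ge> 0"
    and drift: "\<And>j. j \<noteq> i \<Longrightarrow> 1 + measure_pmf.expectation (K j) V \<le> V j"
  shows "positive_recurrent_state K i"
proof -
  have int: "integrable (measure_pmf (K j)) f" for j and f :: "'s \<Rightarrow> real"
    by (rule integrable_measure_pmf_finite[OF fin])
  have S: "(\<Sum>m<n. avoid K m j i) \<le> (if j = i then 0 else V j)" for n j
  proof (induction n arbitrary: j)
    case 0 then show ?case using Vnn by simp
  next
    case (Suc n)
    show ?case
    proof (cases "j = i")
      case True then show ?thesis by (simp add: avoid_self)
    next
      case False
      have "(\<Sum>m<Suc n. avoid K m j i) = avoid K 0 j i + (\<Sum>m<n. avoid K (Suc m) j i)"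
        by (rule sum.lessThan_Suc_shift)
      also have "\<dots> = 1 + (\<Sum>m<n. measure_pmf.expectation (K j) (\<lambda>j'. avoid K m j' i))"
        using False by (simp add: avoid_0 avoid_Suc)
      also have "(\<Sum>m<n. measure_pmf.expectation (K j) (\<lambda>j'. avoid K m j' i))
          = measure_pmf.expectation (K j) (\<lambda>j'. \<Sum>m<n. avoid K m j' i)"
        by (rule Bochner_Integration.integral_sum[symmetric]) (rule int)
      also have "\<dots> \<le> measure_pmf.expectation (K j) V"
        by (rule integral_mono[OF int int]) (use Suc.IH Vnn in \<open>smt (verit)\<close>)
      finally show ?thesis using drift[OF False] False by simp
    qed
  qed
  have B: "(\<Sum>m<n. 1 - return_by K m i) \<le> 1 + measure_pmf.expectation (K i) V" for n
  proof (cases n)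
    case 0 then show ?thesis using Vnn by (simp add: integral_nonneg_AE)
  next
    case (Suc n')
    have "(\<Sum>m<n. 1 - return_by K m i) = (1 - return_by K 0 i) + (\<Sum>m<n'. 1 - return_by K (Suc m) i)"
      unfolding Suc by (rule sum.lessThan_Suc_shift)
    also have "\<dots> = 1 + (\<Sum>m<n'. measure_pmf.expectation (K i) (\<lambda>j. avoid K m j i))"
      by (simp add: return_by_0 return_by_Suc)
    also have "(\<Sum>m<n'. measure_pmf.expectation (K i) (\<lambda>j. avoid K m j i))
          = measure_pmf.expectation (K i) (\<lambda>j. \<Sum>m<n'. avoid K m j i)"
      by (rule Bochner_Integration.integral_sum[symmetric]) (rule int)
    also have "\<dots> \<le> measure_pmf.expectation (K i) V"
      by (rule integral_mono[OF int int]) (use S Vnn in \<open>smt (verit)\<close>)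
    finally show ?thesis by simp
  qed
  have summ: "summable (\<lambda>n. 1 - return_by K n i)"
    by (rule summableI_nonneg_bounded[where x="1 + measure_pmf.expectation (K i) V"])
       (use B return_by_le1 in auto)
  have lim: "(\<lambda>n. return_by K n i) \<longlonglongrightarrow> 1"
  proof -
    have "(\<lambda>n. 1 - return_by K n i) \<longlonglongrightarrow> 0" by (rule summable_LIMSEQ_zero[OF summ])
    then have "(\<lambda>n. 1 - (1 - return_by K n i)) \<longlonglongrightarrow> 1 - 0" by (intro tendsto_intros)
    then show ?thesis by simp
  qed
  have bdd: "bdd_above (range (\<lambda>n. return_by K n i))"
    by (intro bdd_aboveI2[where M=1]) (rule return_by_le1)
  have "return_prob K i \<le> 1"
    unfolding return_prob_def by (rule cSUP_least) (auto simp: return_by_le1)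
  moreover have "1 \<le> return_prob K i"
    unfolding return_prob_def
    by (rule LIMSEQ_le_const2[OF lim]) (use bdd in \<open>auto intro!: cSUP_upper\<close>)
  ultimately show ?thesis
    unfolding positive_recurrent_state_def recurrent_state_def using summ by simp
qed

lemma super_transient:
  fixes H :: "'s \<Rightarrow> real"
  assumes fin: "\<And>j. finite (set_pmf (K j))"
    and Hnn: "\<And>j. H j \<ge> 0" and Hi: "H i = 1"
    and super: "\<And>j. j \<noteq> i \<Longrightarrow> measure_pmf.expectation (K j) H \<le> H j"
    and lt: "measure_pmf.expectation (K i) H < 1"
  shows "transient_state K i"
proof -
  have int: "integrable (measure_pmf (K j)) f" for j and f :: "'s \<Rightarrow> real"
    by (rule integrable_measure_pmf_finite[OF fin])
  have E1: "measure_pmf.expectation (K j) (\<lambda>x. 1 - f x) = 1 - measure_pmf.expectation (K j) f"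
    for j and f :: "'s \<Rightarrow> real"
    by (subst Bochner_Integration.integral_diff[OF int int]) simp
  have A: "1 - avoid K n j i \<le> H j" for n j
  proof (induction n arbitrary: j)
    case 0 then show ?case using Hnn Hi by (simp add: avoid_0)
  next
    case (Suc n)
    show ?case
    proof (cases "j = i")
      case True then show ?thesis using Hi by (simp add: avoid_self)
    next
      case False
      have "1 - avoid K (Suc n) j i = measure_pmf.expectation (K j) (\<lambda>j'. 1 - avoid K n j' i)"
        using False by (simp add: avoid_Suc E1)
      also have "\<dots> \<le> measure_pmf.expectation (K j) H"
        by (rule integral_mono[OF int int]) (rule Suc.IH)
      finally show ?thesis using super[OF False] by simp
    qed
  qed
  define c where "c = max 0 (measure_pmf.expectation (K i) H)"
  have c1: "c < 1" using lt by (simp add: c_def)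
  have R: "return_by K n i \<le> c" for n
  proof (cases n)
    case 0 then show ?thesis by (simp add: return_by_0 c_def)
  next
    case (Suc n')
    have "return_by K n i = 1 - measure_pmf.expectation (K i) (\<lambda>j. avoid K n' j i)"
      using return_by_Suc[of K n' i] Suc by simp
    also have "\<dots> = measure_pmf.expectation (K i) (\<lambda>j. 1 - avoid K n' j i)" by (simp add: E1)
    also have "\<dots> \<le> measure_pmf.expectation (K i) H"
      by (rule integral_mono[OF int int]) (rule A)
    finally show ?thesis by (simp add: c_def)
  qed
  have "return_prob K i \<le> c"
    unfolding return_prob_def by (rule cSUP_least) (auto simp: R)
  then show ?thesis unfolding transient_state_def using c1 by simp
qed

lemma num_b1:
  fixes p q r G T X th :: real
  assumes s: "p+q+r = 1" and q: "q > 0" and pq: "p > q" and th: "th*q = 2*p"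
    and X: "X \<ge> 1" and G: "G*p \<ge> 2"
  shows "1 + q*(G*(T - th*th*X)) + p*(G*(T - X)) + r*(G*(T - th*X)) \<le> G*(T - th*X)"
proof -
  have e: "q*th*th + p + r*th - th = p*(th - 1)"
  proof -
    have a: "q*th*th = 2*p*th" using th by (simp add: mult.commute mult.left_commute)
    have r: "r = 1 - p - q" using s by simp
    have "q*th*th + p + r*th - th = 2*p*th + p - p*th - q*th" unfolding a r by (simp add: algebra_simps)
    also have "\<dots> = 2*p*th + p - p*th - 2*p" using th by (simp add: mult.commute)
    finally show ?thesis by (simp add: algebra_simps)
  qed
  have "1 + q*(G*(T - th*th*X)) + p*(G*(T - X)) + r*(G*(T - th*X)) - G*(T - th*X)
        = 1 + G*T*(p+q+r-1) - G*X*(q*th*th + p + r*th - th)"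
    by (simp add: algebra_simps)
  also have "\<dots> = 1 - G*X*(p*(th - 1))" by (simp only: s e) simp
  also have "\<dots> = 1 - (G*p)*X*(th - 1)" by (simp add: algebra_simps)
  also have "\<dots> \<le> 0"
  proof -
    have "(th - 2)*q > 0" using th pq by (simp add: algebra_simps)
    then have th2: "th \<ge> 2" using q by (simp add: zero_less_mult_iff)
    have "(G*p)*X \<ge> 2*1" using G X by (intro mult_mono) auto
    then have "(G*p)*X*(th-1) \<ge> 2*1" using th2 by (intro mult_mono) auto
    then show ?thesis by simp
  qed
  finally show ?thesis by simp
qed

lemma num_b2:
  fixes p q r G T F th :: real
  assumes s: "p+q+r = 1" and q: "q > 0" and pq: "p > q" and th: "th*q = 2*p"
    and G: "G*p = 2 + p*F" and F: "F \<ge> 0"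
  shows "1 + q*(G*(T - th)) + p*(G*(T - 1) + F) + r*(G*(T - 1)) \<le> G*(T - 1)"
proof -
  have "1 + q*(G*(T - th)) + p*(G*(T - 1) + F) + r*(G*(T - 1)) - G*(T - 1)
      = 1 + G*(T - 1)*(p+q+r-1) + q*G*(1 - th) + p*F"
    by (simp add: algebra_simps)
  also have "\<dots> = 1 + G*q - G*(2*p) + p*F" using s th by (simp add: algebra_simps)
  also have "\<dots> = 1 + G*q - 2*(G*p) + p*F" by simp
  also have "\<dots> = G*q - G*p - 1" using G by simp
  also have "\<dots> \<le> 0"
  proof -
    have "G \<ge> 0" using G pq q F
      by (smt (verit, ccfv_SIG) mult_nonneg_nonneg zero_le_mult_iff)
    then have "G*q \<le> G*p" using pq by (intro mult_left_mono) auto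
    then show ?thesis using F pq q by (smt (verit) mult_nonneg_nonneg)
  qed
  finally show ?thesis by simp
qed

lemma num_c1:
  fixes p q r Eb A g x :: real
  assumes s: "p+q+r = 1" and q: "q > 0" and pq: "p > q" and r: "r > 0" and g: "g*p = 2"
    and Eb: "Eb \<ge> 1" and x: "x \<ge> 1"
  shows "1 + Eb*(g*x - 1) \<le> q*(Eb*(x - 1)) + p*(Eb*(g*g*x - 1))"
proof -
  have "q*(Eb*(x - 1)) + p*(Eb*(g*g*x - 1)) - Eb*(g*x - 1)
        = Eb*(x*(q + (g*p)*g - g) + (1 - p - q))"
    by (simp add: algebra_simps)
  also have "\<dots> = Eb*(x*(q + g) + r)"
  proof -
    have "(g*p)*g = 2*g" using g by simp
    moreover have "1 - p - q = r" using s by simp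
    ultimately show ?thesis by simp
  qed
  also have "\<dots> \<ge> 1"
  proof -
    have g2: "g \<ge> 2" using g pq q s r by (smt (verit) mult_le_cancel_left1 mult.commute)
    have "x*(q+g) \<ge> 1*(q+g)" using x g2 q by (intro mult_right_mono) auto
    then have "x*(q+g) \<ge> q+g" by simp
    then have "x*(q+g) + r \<ge> 2" using g2 q r by linarith
    then have "x*(q+g) + r \<ge> 1*2" by simp
    then have "Eb*(x*(q+g) + r) \<ge> 1*2" using Eb by (intro mult_mono) auto
    then show ?thesis by simp
  qed
  finally show ?thesis by simp
qed

context
  fixes l1 l2 b :: real
  assumes l1: "l1 > 0" and l2: "l2 > 0" and b: "b > 0"
begin

abbreviation "KK \<equiv> Y_kernel l1 l2 b"

lemma reach1_up: "reachable KK 1 i (i+1)"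
  using reach_step[OF K_up[OF l1 l2 b] reach_0] by simp
lemma reach1_down: "reachable KK 1 i (i-1)"
  using reach_step[OF K_down[OF l1 l2 b] reach_0] by simp
lemma reach1_s: "reachable KK 1 i (sY i)"
  using reach_step[OF K_s[OF l1 l2 b] reach_0] by simp

lemma reach_up: "reachable KK m i (i + int m)"
proof (induction m)
  case 0 then show ?case by (simp add: reach_0)
next
  case (Suc m)
  from reach_trans[OF Suc reach1_up] show ?case by (simp add: algebra_simps)
qed

lemma reach_down: "reachable KK m i (i - int m)"
proof (induction m)
  case 0 then show ?case by (simp add: reach_0)
next
  case (Suc m)
  from reach_trans[OF Suc reach1_down] show ?case by (simp add: algebra_simps)
qed

lemma irreducible_Y: "irreducible_chain KK"
  unfolding irreducible_chain_def
proof (intro allI)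
  fix i j :: int
  show "\<exists>n. pstep KK n i j > 0"
  proof (cases "i \<le> j")
    case True
    then show ?thesis using reach_up[of "nat (j - i)" i] by (intro exI pstep_pos) auto
  next
    case False
    then show ?thesis using reach_down[of "nat (i - j)" i] by (intro exI pstep_pos) auto
  qed
qed

lemma aperiodic_Y: "aperiodic_chain KK"
  unfolding aperiodic_chain_def
proof (intro allI)
  fix i :: int
  define S where "S = {n. n > 0 \<and> pstep KK n i i > 0}"
  show "Gcd {n. n > 0 \<and> pstep KK n i i > 0} = 1"
    unfolding S_def[symmetric]
  proof (cases "i > 0")
    case False
    then have "reachable KK 1 i i" using reach1_s[of i] by (simp add: sY_def)
    then have "1 \<in> S" unfolding S_def by (auto intro: pstep_pos)
    then have "Gcd S dvd 1" by (rule Gcd_dvd)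
    then show "Gcd S = 1" by simp
  next
    case True
    have r0: "reachable KK 1 i 0" using reach1_s[of i] True by (simp add: sY_def)
    have r00: "reachable KK 1 0 0" using reach1_s[of 0] by (simp add: sY_def)
    have r0i: "reachable KK (nat i) 0 i" using reach_up[of "nat i" 0] True by simp
    have "reachable KK (1 + nat i) i i" by (rule reach_trans[OF r0 r0i])
    then have a: "1 + nat i \<in> S" unfolding S_def by (auto intro: pstep_pos)
    have "reachable KK (1 + 1 + nat i) i i" by (rule reach_trans[OF reach_trans[OF r0 r00] r0i])
    then have c: "2 + nat i \<in> S" unfolding S_def by (auto intro: pstep_pos)
    have "Gcd S dvd (2 + nat i) - (1 + nat i)"
      by (rule dvd_diff_nat; rule Gcd_dvd) (use a c in auto)
    then show "Gcd S = 1" by simp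
  qed
qed

lemma EKK:
  "measure_pmf.expectation (KK j) f
   = (l1/(l1+l2+b)) * f (j-1) + (l2/(l1+l2+b)) * f (j+1) + (b/(l1+l2+b)) * f (sY j)"
  by (rule E_K[OF l1 l2 b])

lemma pqr: "l1/(l1+l2+b) + l2/(l1+l2+b) + b/(l1+l2+b) = 1"
  using l1 l2 b by (simp add: add_divide_distrib[symmetric])

end

lemma num_a:
  fixes p q r A d :: real
  assumes "p+q+r = 1" "A*(p-q) = 1"
  shows "1 + q*(A*(d+1)) + p*(A*(d-1)) + r*(A*d) = A*d"
proof -
  have "1 + q*(A*(d+1)) + p*(A*(d-1)) + r*(A*d) = A*d*(p+q+r) + 1 - A*(p-q)"
    by (simp add: algebra_simps)
  then show ?thesis using assms by simp
qed

lemma num_a2: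
  fixes p q r A d V0 :: real
  assumes "p+q+r = 1" "A*(p-q) = 1"
  shows "1 + q*(V0 + A*(d+1)) + p*(V0 + A*(d-1)) + r*(V0 + A*d) = V0 + A*d"
proof -
  have "1 + q*(V0 + A*(d+1)) + p*(V0 + A*(d-1)) + r*(V0 + A*d) = (V0 + A*d)*(p+q+r) + 1 - A*(p-q)"
    by (simp add: algebra_simps)
  then show ?thesis using assms by simp
qed

lemma num_c:
  fixes p q r C F W :: real
  assumes "p+q+r = 1" "r*F = 1" "W \<le> C + F" "q \<ge> 0" "p \<ge> 0"
  shows "1 + q*W + p*(C+F) + r*C \<le> C + F"
proof -
  have "q*W \<le> q*(C+F)" using assms by (intro mult_left_mono) auto
  moreover have "1 + q*(C+F) + p*(C+F) + r*C = (C+F)*(p+q+r) + 1 - r*F"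
    by (simp add: algebra_simps)
  ultimately show ?thesis using assms by simp
qed

lemma num_t:
  fixes p q r rho X :: real
  assumes "p+q+r = 1" "q*rho = p"
  shows "q*(rho*rho*X) + p*X + r*(rho*X) = rho*X"
proof -
  have r: "r = 1 - p - q" using assms(1) by simp
  have "q*(rho*rho*X) + p*X + r*(rho*X) = (q*rho)*(rho*X) + p*X + (1-p-q)*(rho*X)"
    unfolding r by (simp add: algebra_simps)
  also have "\<dots> = p*(rho*X) + p*X + (1-p-q)*(rho*X)" using assms(2) by simp
  also have "\<dots> = rho*X + p*X - (q*rho)*X" by (simp add: algebra_simps)
  also have "\<dots> = rho*X" using assms(2) by simp
  finally show ?thesis .
qed

context
  fixes l1 l2 b :: real
  assumes l1: "l1 > 0" and l2: "l2 > 0" and b: "b > 0"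
begin

lemma posrec_Y:
  assumes lt: "l1 < l2"
  shows "positive_recurrent_state (Y_kernel l1 l2 b) i"
proof -
  define Z where "Z = l1+l2+b"
  have Z: "Z > 0" using l1 l2 b by (simp add: Z_def)
  define q where "q = l1/Z"
  define p where "p = l2/Z"
  define r where "r = b/Z"
  have q0: "q > 0" and p0: "p > 0" and r0: "r > 0" using l1 l2 b Z by (auto simp: q_def p_def r_def)
  have s: "p+q+r = 1" using pqr[OF l1 l2 b] by (simp add: p_def q_def r_def Z_def)
  have pq: "p > q" using lt Z by (simp add: p_def q_def divide_strict_right_mono)
  have p1: "p \<le> 1" using s q0 r0 by simp
  have EK: "\<And>j f. measure_pmf.expectation (Y_kernel l1 l2 b j) f = q * f (j-1) + p * f (j+1) + r * f (sY j)"
    using EKK[OF l1 l2 b] by (simp add: p_def q_def r_def Z_def mult.commute add.commute add.left_commute)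
  define A where "A = 1/(p-q)"
  have A: "A*(p-q) = 1" "A \<ge> 0" using pq by (auto simp: A_def)
  define F where "F = 1/r"
  have F: "r*F = 1" "F \<ge> 0" using r0 by (auto simp: F_def)
  show ?thesis
  proof (cases "i \<le> 0")
    case True
    define th where "th = 2*p/q"
    have th: "th*q = 2*p" using q0 by (simp add: th_def)
    have th1: "th \<ge> 1"
    proof -
      have "(th - 1)*q = 2*p - q" using th by (simp add: algebra_simps)
      then have "(th - 1)*q > 0" using pq p0 by linarith
      then show ?thesis using q0 by (simp add: zero_less_mult_iff)
    qed
    define G where "G = 2/p + F"
    have G: "G*p = 2 + p*F" "G \<ge> 0" using p0 F by (auto simp: G_def algebra_simps)
    have Gp2: "G*p \<ge> 2" using G p0 F by simp
    define T where "T = th ^ nat (-i)"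
    have T1: "T \<ge> 1" using th1 by (simp add: T_def)
    define V where "V j = (if j \<le> i then A * of_int (i - j) else if j \<le> 0 then G*(T - th ^ nat (-j)) else G*(T-1) + F)" for j
    have Vmid: "V j = G*(T - th ^ nat (-j))" if "i \<le> j" "j \<le> 0" for j
      using that by (cases "j = i") (auto simp: V_def T_def)
    have Vnn: "V j \<ge> 0" for j
    proof -
      have "th ^ nat (-j) \<le> T" if "i \<le> j" "j \<le> 0"
        unfolding T_def using that th1 by (intro power_increasing) auto
      then show ?thesis using A G T1 F by (auto simp: V_def)
    qed
    have drift: "1 + measure_pmf.expectation (Y_kernel l1 l2 b j) V \<le> V j" if "j \<noteq> i" for j
    proof -
      consider "j < i" | "i < j" "j < 0" | "j = 0" "i < 0" | "j \<ge> 1" using \<open>j \<noteq> i\<close> True by linarith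
      then show ?thesis
      proof cases
        case 1
        then have sj: "sY j = j" using True by (simp add: sY_def)
        define d where "d = real_of_int (i - j)"
        have e: "V (j-1) = A * (d + 1)" "V (j+1) = A * (d - 1)" "V j = A * d"
          using 1 by (auto simp: V_def d_def)
        show ?thesis unfolding EK sj e using num_a[OF s A(1), of d] by simp
      next
        case 2
        then have sj: "sY j = j" by (simp add: sY_def)
        obtain w where w: "nat (-j) = Suc w" using 2 by (metis gr0_implies_Suc zero_less_nat_eq neg_0_less_iff_less)
        have "nat (-(j-1)) = Suc (Suc w)" "nat (-(j+1)) = w" using w 2 by auto
        then have "V (j-1) = G*(T - th*th*th^w)" "V (j+1) = G*(T - th^w)" "V j = G*(T - th*th^w)"
          using 2 w by (auto simp: Vmid)
        moreover have "th^w \<ge> 1" using th1 by simp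
        ultimately show ?thesis using num_b1[OF s q0 pq th _ Gp2, of "th^w" T] sj by (simp add: EK)
      next
        case 3
        have "V (0-1) = G*(T - th)" using 3 Vmid[of "-1"] by simp
        moreover have "V (0+1) = G*(T-1) + F" using 3 by (simp add: V_def)
        moreover have "V 0 = G*(T - 1)" using 3 Vmid[of 0] by simp
        ultimately show ?thesis using num_b2[OF s q0 pq th G(1) F(2), of T] 3 by (simp add: EK sY_def)
      next
        case 4
        have C: "V 0 = G*(T-1)" using True by (simp add: Vmid)
        have "V (j+1) = G*(T-1) + F" "V j = G*(T-1) + F" using 4 True by (auto simp: V_def)
        moreover have "V (j-1) \<le> G*(T-1) + F"
          using 4 True C F by (cases "j = 1") (auto simp: V_def)
        moreover have "sY j = 0" using 4 by (simp add: sY_def)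
        ultimately show ?thesis using num_c[OF s F(1) _ _ , of "V (j-1)" "G*(T-1)"] q0 p0 C
          by (simp add: EK)
      qed
    qed
    show ?thesis by (rule lyap_pos_rec[OF finite_K[OF l1 l2 b] Vnn drift])
  next
    case False
    define g where "g = 2/p"
    have g: "g*p = 2" using p0 by (simp add: g_def)
    have g1: "g \<ge> 1" using p0 p1 by (simp add: g_def)
    define Eb where "Eb = 1 + A"
    have Eb: "Eb \<ge> 1" using A by (simp add: Eb_def)
    define B where "B j = Eb * (g ^ nat j - 1)" for j :: int
    define V0 where "V0 = B i"
    have Bmono: "B j \<le> B k" if "j \<le> k" for j k
      unfolding B_def using Eb g1 that by (intro mult_left_mono) (auto intro!: power_increasing)
    have B0: "B 0 = 0" by (simp add: B_def)
    have V0: "V0 \<ge> 0" using Bmono[of 0 i] False B0 by (simp add: V0_def)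
    define V where "V j = (if j \<le> 0 then V0 + A * of_int (-j) else if j \<le> i then V0 - B j else V0 + F)" for j
    have Vmid: "V j = V0 - B j" if "0 \<le> j" "j \<le> i" for j
      using that B0 by (cases "j = 0") (auto simp: V_def)
    have Vnn: "V j \<ge> 0" for j
    proof -
      have "A * of_int j \<le> 0" if "j \<le> 0" using A(2) that by (simp add: mult_nonneg_nonpos)
      then show ?thesis using V0 A F Bmono[of j i] by (auto simp: V_def V0_def)
    qed
    have drift: "1 + measure_pmf.expectation (Y_kernel l1 l2 b j) V \<le> V j" if "j \<noteq> i" for j
    proof -
      consider "j < 0" | "j = 0" | "1 \<le> j" "j < i" | "j > i" using \<open>j \<noteq> i\<close> False by linarith
      then show ?thesis
      proof cases
        case 1
        then have sj: "sY j = j" by (simp add: sY_def)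
        define d where "d = real_of_int (- j)"
        have e: "V (j-1) = V0 + A * (d + 1)" "V (j+1) = V0 + A * (d - 1)" "V j = V0 + A * d"
          using 1 by (auto simp: V_def d_def)
        show ?thesis unfolding EK sj e using num_a2[OF s A(1), of V0 d] by simp
      next
        case 2
        have e: "V (0-1) = V0 + A" "V (0+1) = V0 - Eb*(g - 1)" "V 0 = V0" "sY 0 = 0"
          using False by (auto simp: V_def B_def sY_def)
        have k: "1 + q*A \<le> p*(Eb*(g-1))"
        proof -
          have "p*(Eb*(g-1)) = Eb*(2 - p)" using g by (simp add: algebra_simps)
          moreover have "Eb*(2-p) \<ge> Eb*1" using p1 Eb by (intro mult_left_mono) auto
          moreover have "q*A \<le> 1*A" using A q0 s p0 r0 by (intro mult_right_mono) auto
          moreover have "Eb = 1 + A" by (simp add: Eb_def)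
          ultimately show ?thesis by linarith
        qed
        have "q*(V0+A) + p*(V0 - Eb*(g-1)) + r*V0 = V0*(p+q+r) + q*A - p*(Eb*(g-1))"
          by (simp add: algebra_simps)
        then show ?thesis unfolding 2 EK e using s k by simp
      next
        case 3
        have "nat j \<noteq> 0" using 3 by simp
        then obtain w where w: "nat j = Suc w" using not0_implies_Suc by blast
        have "nat (j-1) = w" "nat (j+1) = Suc (Suc w)" using w 3 by auto
        then have e: "V (j-1) = V0 - Eb*(g^w - 1)" "V (j+1) = V0 - Eb*(g*g*g^w - 1)" "V j = V0 - Eb*(g*g^w - 1)"
          using 3 w by (auto simp: Vmid B_def)
        have e2: "sY j = 0" "V 0 = V0" using 3 by (auto simp add: sY_def V_def)
        have "g^w \<ge> 1" using g1 by simp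
        note k = num_c1[OF s q0 pq r0 g Eb this]
        have "q*(V0 - Eb*(g^w - 1)) + p*(V0 - Eb*(g*g*g^w - 1)) + r*V0
             = V0*(p+q+r) - q*(Eb*(g^w - 1)) - p*(Eb*(g*g*g^w - 1))"
          by (simp add: algebra_simps)
        then show ?thesis unfolding EK e e2 using s k by simp
      next
        case 4
        have "V (j+1) = V0 + F" "V j = V0 + F" using 4 False by (auto simp: V_def)
        moreover have "V (j-1) \<le> V0 + F"
          using 4 False F V0 Vnn[of "j-1"] Bmono[of 0 i] B0 by (cases "j - 1 = i") (auto simp: V_def V0_def)
        moreover have "sY j = 0" using 4 False by (simp add: sY_def)
        moreover have "V 0 = V0" by (simp add: V_def)
        ultimately show ?thesis using num_c[OF s F(1) _ _ , of "V (j-1)" "V0"] q0 p0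
          by (simp add: EK)
      qed
    qed
    show ?thesis by (rule lyap_pos_rec[OF finite_K[OF l1 l2 b] Vnn drift])
  qed
qed

lemma trans_Y:
  assumes gt: "l1 > l2"
  shows "transient_state (Y_kernel l1 l2 b) i"
proof -
  define Z where "Z = l1+l2+b"
  have Z: "Z > 0" using l1 l2 b by (simp add: Z_def)
  define q where "q = l1/Z"
  define p where "p = l2/Z"
  define r where "r = b/Z"
  have q0: "q > 0" and p0: "p > 0" and r0: "r > 0" using l1 l2 b Z by (auto simp: q_def p_def r_def)
  have s: "p+q+r = 1" using pqr[OF l1 l2 b] by (simp add: p_def q_def r_def Z_def)
  have pq: "q > p" using gt Z by (simp add: p_def q_def divide_strict_right_mono)
  have EK: "\<And>j f. measure_pmf.expectation (Y_kernel l1 l2 b j) f = q * f (j-1) + p * f (j+1) + r * f (sY j)"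
    using EKK[OF l1 l2 b] by (simp add: p_def q_def r_def Z_def mult.commute add.commute add.left_commute)
  define rho where "rho = p/q"
  have rho: "q*rho = p" "rho \<ge> 0" "rho < 1" using q0 p0 pq by (auto simp: rho_def)
  define a where "a = min i 1"
  define H where "H j = rho ^ nat (a - j)" for j
  have Hnn: "H j \<ge> 0" for j using rho by (simp add: H_def)
  have Hle: "H j \<le> 1" for j using rho by (simp add: H_def power_le_one)
  have Hi: "H i = 1" by (simp add: H_def a_def)
  have super: "measure_pmf.expectation (Y_kernel l1 l2 b j) H \<le> H j" if "j \<noteq> i" for j
  proof (cases "j \<ge> a")
    case True
    then have "H j = 1" by (simp add: H_def)
    moreover have "q * H (j-1) + p * H (j+1) + r * H (sY j) \<le> q*1 + p*1 + r*1"
      using q0 p0 r0 Hle by (intro add_mono mult_left_mono) auto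
    ultimately show ?thesis using s by (simp add: EK)
  next
    case False
    then have sj: "sY j = j" by (auto simp: sY_def a_def)
    have "nat (a - j) \<noteq> 0" using False by simp
    then obtain w where w: "nat (a - j) = Suc w" using not0_implies_Suc by blast
    have "nat (a - (j-1)) = Suc (Suc w)" "nat (a - (j+1)) = w" using w by auto
    then have e: "H (j-1) = rho*rho*rho^w" "H (j+1) = rho^w" "H j = rho*rho^w"
      using w by (auto simp: H_def)
    show ?thesis unfolding EK sj e using num_t[OF s rho(1), of "rho^w"] by simp
  qed
  have lt: "measure_pmf.expectation (Y_kernel l1 l2 b i) H < 1"
  proof (cases "i \<le> 0")
    case True
    then have e: "H (i-1) = rho" "H (i+1) = 1" "sY i = i" by (auto simp: H_def a_def sY_def)
    have "p < q" by (rule pq)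
    then show ?thesis unfolding EK e Hi using s rho(1) by simp
  next
    case False
    then have e: "H (i+1) = 1" "sY i = 0" "H 0 = rho" by (auto simp: H_def a_def sY_def)
    have "q * H (i-1) \<le> q*1" using Hle q0 by (intro mult_left_mono) auto
    moreover have "r*rho < r*1" using r0 rho by (intro mult_strict_left_mono) auto
    ultimately show ?thesis unfolding EK e using s by simp
  qed
  show ?thesis by (rule super_transient[OF finite_K[OF l1 l2 b] Hnn Hi super lt])
qed

lemma ergodic_Y: "l1 < l2 \<Longrightarrow> ergodic_chain (Y_kernel l1 l2 b)"
  unfolding ergodic_chain_def using irreducible_Y[OF l1 l2 b] aperiodic_Y[OF l1 l2 b] posrec_Y by blast

lemma transient_Y: "l1 > l2 \<Longrightarrow> transient_chain (Y_kernel l1 l2 b)"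
  unfolding transient_chain_def using trans_Y by blast

end

definition cstep :: "int \<times> int \<Rightarrow> real \<times> nat \<Rightarrow> int \<times> int" where
  "cstep x e = cascade_step x (snd e)"

abbreviation cnt :: "(real \<times> nat \<Rightarrow> bool) \<Rightarrow> (real \<times> nat) list \<Rightarrow> int" where
  "cnt P L \<equiv> int (length (filter P L))"

definition isR :: "real \<times> nat \<Rightarrow> bool" where "isR e \<longleftrightarrow> snd e \<noteq> 0 \<and> snd e \<noteq> 1"

lemma F1: "fst (foldl cstep x L) = fst x + cnt (\<lambda>e. snd e = 0) L"
  by (induction L arbitrary: x) (auto simp: cstep_def cascade_step_def)

lemma F2: "snd (foldl cstep x L) \<le> snd x + cnt (\<lambda>e. snd e = 1) L"
proof (induction L arbitrary: x)
  case Nil then show ?case by simp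
next
  case (Cons e L)
  have "snd (cstep x e) \<le> snd x + (if snd e = 1 then 1 else 0)"
    by (auto simp: cstep_def cascade_step_def)
  then show ?case using Cons[of "cstep x e"] by (simp split: if_splits)
qed

lemma F3:
  assumes "snd x + cnt (\<lambda>e. snd e = 1) L \<ge> v"
    and "\<And>m. m < length L \<Longrightarrow> isR (L!m) \<Longrightarrow>
          fst x + cnt (\<lambda>e. snd e = 0) (take m L) + cnt (\<lambda>e. snd e = 1) (drop (Suc m) L) \<ge> v"
  shows "snd (foldl cstep x L) \<ge> v"
  using assms
proof (induction L arbitrary: x)
  case Nil then show ?case by simp
next
  case (Cons e L)
  let ?x = "cstep x e"
  have h0: "fst x + cnt (\<lambda>e. snd e = 1) L \<ge> v" if "isR e"
    using Cons.prems(2)[of 0] that by simp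
  have A: "snd ?x + cnt (\<lambda>e. snd e = 1) L \<ge> v"
    using Cons.prems(1) h0 by (auto simp: cstep_def cascade_step_def isR_def)
  have B: "fst ?x + cnt (\<lambda>e. snd e = 0) (take m L) + cnt (\<lambda>e. snd e = 1) (drop (Suc m) L) \<ge> v"
    if "m < length L" "isR (L!m)" for m
    using Cons.prems(2)[of "Suc m"] that by (auto simp: cstep_def cascade_step_def)
  show ?case using Cons.IH[OF A B] by simp
qed

lemma F4:
  assumes "m < length L" "isR (L!m)"
  shows "snd (foldl cstep x L) \<le> fst x + cnt (\<lambda>e. snd e = 0) (take (Suc m) L) + cnt (\<lambda>e. snd e = 1) (drop (Suc m) L)"
proof -
  have L: "L = take m L @ [L!m] @ drop (Suc m) L" using assms(1) by (simp add: id_take_nth_drop)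
  define z where "z = foldl cstep x (take m L)"
  define y where "y = cstep z (L!m)"
  have fy: "foldl cstep x L = foldl cstep y (drop (Suc m) L)"
    by (subst L) (simp add: y_def z_def)
  have "snd y \<le> fst y" using assms(2) by (auto simp: y_def cstep_def cascade_step_def isR_def)
  moreover have "fst y = fst x + cnt (\<lambda>e. snd e = 0) (take (Suc m) L)"
  proof -
    have "fst y = fst (foldl cstep x (take (Suc m) L))"
      using assms(1) by (simp add: y_def z_def take_Suc_conv_app_nth)
    then show ?thesis by (simp add: F1)
  qed
  ultimately show ?thesis using F2[of y "drop (Suc m) L"] fy by simp
qed

definition Ev :: "(nat \<Rightarrow> nat \<Rightarrow> real) \<Rightarrow> real \<Rightarrow> (real \<times> nat) set" where
  "Ev g t = {(flow_point g k n, k) | k n. k < 3 \<and> flow_point g k n \<le> t}"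

definition goodg :: "(nat \<Rightarrow> nat \<Rightarrow> real) \<Rightarrow> bool" where
  "goodg g \<longleftrightarrow> (\<forall>k<3. \<forall>n. g k n > 0) \<and>
     (\<forall>k k' n n'. k < 3 \<longrightarrow> k' < 3 \<longrightarrow> k \<noteq> k' \<longrightarrow> flow_point g k n \<noteq> flow_point g k' n')"

definition fin :: "(nat \<Rightarrow> nat \<Rightarrow> real) \<Rightarrow> real \<Rightarrow> bool" where
  "fin g t \<longleftrightarrow> (\<forall>k<3. finite {n. flow_point g k n \<le> t})"

definition Nle :: "(nat \<Rightarrow> nat \<Rightarrow> real) \<Rightarrow> nat \<Rightarrow> real \<Rightarrow> nat" where
  "Nle g k s = card {n. flow_point g k n \<le> s}"

definition Nlt :: "(nat \<Rightarrow> nat \<Rightarrow> real) \<Rightarrow> nat \<Rightarrow> real \<Rightarrow> nat" where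
  "Nlt g k s = card {n. flow_point g k n < s}"

lemma fp_Suc: "flow_point g k (Suc n) = flow_point g k n + g k (Suc n)"
  by (simp add: flow_point_def)

lemma fp_smono: "goodg g \<Longrightarrow> k < 3 \<Longrightarrow> strict_mono (flow_point g k)"
  by (rule strict_mono_Suc_iff[THEN iffD2]) (auto simp: fp_Suc goodg_def)

lemma fp_inj: "goodg g \<Longrightarrow> k < 3 \<Longrightarrow> inj (flow_point g k)"
  using fp_smono strict_mono_imp_inj_on by blast

lemma Ev_eq: "Ev g t = (\<Union>k\<in>{..<3}. (\<lambda>n. (flow_point g k n, k)) ` {n. flow_point g k n \<le> t})"
  by (auto simp: Ev_def)

lemma Ev_finite: "fin g t \<Longrightarrow> finite (Ev g t)"
  unfolding Ev_eq fin_def by auto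

lemma Ev_inj: "goodg g \<Longrightarrow> inj_on fst (Ev g t)"
proof (rule inj_onI)
  fix x y assume g: "goodg g" and x: "x \<in> Ev g t" and y: "y \<in> Ev g t" and f: "fst x = fst y"
  from x obtain k n where kn: "x = (flow_point g k n, k)" "k < 3" unfolding Ev_def by blast
  from y obtain k' n' where kn': "y = (flow_point g k' n', k')" "k' < 3" unfolding Ev_def by blast
  have "flow_point g k n = flow_point g k' n'" using kn kn' f by simp
  then have "k = k'" using g kn(2) kn'(2) unfolding goodg_def by blast
  then show "x = y" using kn kn' f by simp
qed

lemma ins_eq: "linorder.insort_key (\<le>) f x xs = insort_key (f::'a \<Rightarrow> real) x xs"
  by (induction xs) (simp_all add: linorder.insort_key.simps[OF linorder_class.linorder_axioms])

lemma skl_eq: "(sorted_key_list_of_set (f::'a \<Rightarrow> real) A) = linorder.sorted_key_list_of_set (\<le>) f A"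
proof -
  have "linorder.insort_key (\<le>) f = insort_key f" by (intro ext) (rule ins_eq)
  then show ?thesis
  by (simp add: sorted_key_list_of_set_def linorder.sorted_key_list_of_set_def[OF linorder_class.linorder_axioms])
qed

lemma L_props:
  assumes "goodg g" "fin g t"
  shows "set (events_upto g t) = Ev g t" "distinct (events_upto g t)" "sorted (map fst (events_upto g t))"
proof -
  interpret F: folding_insort_key "(\<le>) :: real \<Rightarrow> real \<Rightarrow> bool" "(<)" "Ev g t" fst
    by standard (rule Ev_inj[OF assms(1)])
  have e: "events_upto g t = sorted_key_list_of_set fst (Ev g t)"
    unfolding events_upto_def Ev_def ..
  note e = e[unfolded skl_eq]
  show "set (events_upto g t) = Ev g t" unfolding e
    by (rule F.set_sorted_key_list_of_set) (auto simp: Ev_finite[OF assms(2)])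
  show "distinct (events_upto g t)" unfolding e
    by (rule F.distinct_if_distinct_map, rule F.distinct_sorted_key_list_of_set) simp
  show "sorted (map fst (events_upto g t))" unfolding e
    by (rule F.sorted_sorted_key_list_of_set) simp
qed

lemma card_Ev_k:
  assumes "goodg g" "k < 3" "\<And>\<tau>. Q \<tau> \<Longrightarrow> \<tau> \<le> t"
  shows "card ({e. snd e = k \<and> Q (fst e)} \<inter> Ev g t) = card {n. Q (flow_point g k n)}"
proof -
  have "{e. snd e = k \<and> Q (fst e)} \<inter> Ev g t = (\<lambda>n. (flow_point g k n, k)) ` {n. Q (flow_point g k n)}"
  proof
    show "{e. snd e = k \<and> Q (fst e)} \<inter> Ev g t \<subseteq> (\<lambda>n. (flow_point g k n, k)) ` {n. Q (flow_point g k n)}"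
      unfolding Ev_def by auto
    show "(\<lambda>n. (flow_point g k n, k)) ` {n. Q (flow_point g k n)} \<subseteq> {e. snd e = k \<and> Q (fst e)} \<inter> Ev g t"
    proof
      fix e assume "e \<in> (\<lambda>n. (flow_point g k n, k)) ` {n. Q (flow_point g k n)}"
      then obtain n where n: "e = (flow_point g k n, k)" "Q (flow_point g k n)" by blast
      then have "flow_point g k n \<le> t" using assms(3) by blast
      then show "e \<in> {e. snd e = k \<and> Q (fst e)} \<inter> Ev g t" unfolding Ev_def using n assms(2) by auto
    qed
  qed
  moreover have "inj_on (\<lambda>n. (flow_point g k n, k)) {n. Q (flow_point g k n)}"
    using fp_inj[OF assms(1,2)] by (auto simp: inj_on_def inj_def)
  ultimately show ?thesis by (simp add: card_image)
qed

lemma pos_before: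
  assumes "sorted (map fst L)" "distinct L" "m < length L"
  shows "int (card ({e. P e \<and> fst e < fst (L!m)} \<inter> set L)) \<le> cnt P (take m L)"
proof -
  have "{e. P e \<and> fst e < fst (L!m)} \<inter> set L \<subseteq> {e. P e} \<inter> set (take m L)"
  proof
    fix e assume e: "e \<in> {e. P e \<and> fst e < fst (L!m)} \<inter> set L"
    then obtain k where k: "k < length L" "e = L!k" by (auto simp: in_set_conv_nth)
    have "k < m"
    proof (rule ccontr)
      assume "\<not> k < m"
      then have "fst (L!m) \<le> fst (L!k)" using assms(1) k(1) sorted_nth_mono[OF assms(1), of m k] by simp
      then show False using e k by simp
    qed
    then have eq: "take m L ! k = e" and len: "k < length (take m L)" using k by auto
    have "P e" using e by simp
    then show "e \<in> {e. P e} \<inter> set (take m L)" using nth_mem[OF len] eq by simp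
  qed
  then have "card ({e. P e \<and> fst e < fst (L!m)} \<inter> set L) \<le> card ({e. P e} \<inter> set (take m L))"
    by (rule card_mono[rotated]) simp
  also have "\<dots> = length (filter P (take m L))"
    using assms(2) by (simp add: distinct_length_filter)
  finally show ?thesis by simp
qed

lemma pos_after:
  assumes "sorted (map fst L)" "distinct L" "m < length L"
  shows "int (card ({e. P e \<and> fst e > fst (L!m)} \<inter> set L)) \<le> cnt P (drop (Suc m) L)"
proof -
  have "{e. P e \<and> fst e > fst (L!m)} \<inter> set L \<subseteq> {e. P e} \<inter> set (drop (Suc m) L)"
  proof
    fix e assume e: "e \<in> {e. P e \<and> fst e > fst (L!m)} \<inter> set L"
    then obtain k where k: "k < length L" "e = L!k" by (auto simp: in_set_conv_nth)
    have "m < k"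
    proof (rule ccontr)
      assume "\<not> m < k"
      then have "fst (L!k) \<le> fst (L!m)" using assms sorted_nth_mono[OF assms(1), of k m] by simp
      then show False using e k by simp
    qed
    then have eq: "drop (Suc m) L ! (k - Suc m) = e" and len: "k - Suc m < length (drop (Suc m) L)"
      using k by auto
    have "P e" using e by simp
    then show "e \<in> {e. P e} \<inter> set (drop (Suc m) L)" using nth_mem[OF len] eq by simp
  qed
  then have "card ({e. P e \<and> fst e > fst (L!m)} \<inter> set L) \<le> card ({e. P e} \<inter> set (drop (Suc m) L))"
    by (rule card_mono[rotated]) simp
  also have "\<dots> = length (filter P (drop (Suc m) L))"
    using assms(2) by (simp add: distinct_length_filter)
  finally show ?thesis by simp
qed

lemma pos_after_le:
  assumes "sorted (map fst L)" "distinct L" "m < length L"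
  shows "cnt P (drop (Suc m) L) \<le> int (card ({e. P e \<and> fst e \<ge> fst (L!m)} \<inter> set L))"
proof -
  have "{e. P e} \<inter> set (drop (Suc m) L) \<subseteq> {e. P e \<and> fst e \<ge> fst (L!m)} \<inter> set L"
  proof
    fix e assume e: "e \<in> {e. P e} \<inter> set (drop (Suc m) L)"
    then obtain k where k: "k < length (drop (Suc m) L)" "e = drop (Suc m) L ! k"
      by (auto simp: in_set_conv_nth)
    then have e2: "e = L ! (Suc m + k)" "Suc m + k < length L" by auto
    have "fst (L!m) \<le> fst (L!(Suc m + k))" using sorted_nth_mono[OF assms(1), of m "Suc m + k"] e2 by simp
    moreover have "P e" using e by simp
    moreover have "e \<in> set L" using e2 nth_mem[OF e2(2)] by simp
    ultimately show "e \<in> {e. P e \<and> fst e \<ge> fst (L!m)} \<inter> set L" using e2 by simp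
  qed
  then have "card ({e. P e} \<inter> set (drop (Suc m) L)) \<le> card ({e. P e \<and> fst e \<ge> fst (L!m)} \<inter> set L)"
    by (rule card_mono[rotated]) simp
  moreover have "length (filter P (drop (Suc m) L)) = card ({e. P e} \<inter> set (drop (Suc m) L))"
    using assms(2) by (simp add: distinct_length_filter)
  ultimately show ?thesis by simp
qed

lemma cnt_take_le: "cnt P (take m L) \<le> cnt P L"
proof -
  have "length (filter P L) = length (filter P (take m L)) + length (filter P (drop m L))"
    by (subst append_take_drop_id[symmetric, of L m], subst filter_append) simp
  then show ?thesis by simp
qed

lemma card_between_lt:
  assumes "finite {n. f n \<le> (t::real)}" "a \<le> t"
  shows "int (card {n. a < f n \<and> f n \<le> t}) = int (card {n. f n \<le> t}) - int (card {n. f n \<le> a})"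
proof -
  have "{n. a < f n \<and> f n \<le> t} = {n. f n \<le> t} - {n. f n \<le> a}" by auto
  moreover have "{n. f n \<le> a} \<subseteq> {n. f n \<le> t}" using assms(2) by auto
  moreover have "finite {n. f n \<le> a}" by (rule finite_subset[OF _ assms(1)]) (use assms(2) in auto)
  ultimately show ?thesis using assms(1) by (simp add: card_Diff_subset of_nat_diff card_mono)
qed

lemma card_between_le:
  assumes "finite {n. f n \<le> (t::real)}" "a \<le> t"
  shows "int (card {n. a \<le> f n \<and> f n \<le> t}) = int (card {n. f n \<le> t}) - int (card {n. f n < a})"
proof -
  have "{n. a \<le> f n \<and> f n \<le> t} = {n. f n \<le> t} - {n. f n < a}" by auto
  moreover have "{n. f n < a} \<subseteq> {n. f n \<le> t}" using assms(2) by auto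
  moreover have "finite {n. f n < a}" by (rule finite_subset[OF _ assms(1)]) (use assms(2) in auto)
  ultimately show ?thesis using assms(1) by (simp add: card_Diff_subset of_nat_diff card_mono)
qed

lemma cascade_foldl: "cascade_state x0 g t = foldl cstep x0 (events_upto g t)"
proof -
  have "(\<lambda>x e. cascade_step x (snd e)) = cstep" by (intro ext) (simp add: cstep_def)
  then show ?thesis by (simp add: cascade_state_def)
qed

lemma Ev_fst_le: "e \<in> Ev g t \<Longrightarrow> fst e \<le> t"
  by (auto simp: Ev_def)

context
  fixes g t
  assumes good: "goodg g" and fn: "fin g t"
begin

abbreviation "LL \<equiv> events_upto g t"

lemma LL: "set LL = Ev g t" "distinct LL" "sorted (map fst LL)"
  using L_props[OF good fn] by auto

lemma cnt_all: "k < 3 \<Longrightarrow> cnt (\<lambda>e. snd e = k) LL = int (Nle g k t)"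
proof -
  assume k: "k < 3"
  have "length (filter (\<lambda>e. snd e = k) LL) = card ({e. snd e = k} \<inter> Ev g t)"
    using LL by (simp add: distinct_length_filter)
  also have "{e. snd e = k} \<inter> Ev g t = {e. snd e = k \<and> fst e \<le> t} \<inter> Ev g t"
    using Ev_fst_le by blast
  also have "card \<dots> = Nle g k t"
    unfolding Nle_def by (rule card_Ev_k[OF good k]) simp
  finally show ?thesis by simp
qed

lemma D1: "fst (cascade_state x0 g t) = fst x0 + int (Nle g 0 t)"
  by (simp add: cascade_foldl F1 cnt_all)

lemma D2: "snd (cascade_state x0 g t) \<le> snd x0 + int (Nle g 1 t)"
  using F2[of x0 LL] cnt_all[of 1] by (simp add: cascade_foldl)

lemma reset_pos:
  assumes "m < length LL" "isR (LL!m)"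
  shows "\<exists>n. LL!m = (flow_point g 2 n, 2) \<and> flow_point g 2 n \<le> t"
proof -
  have "LL!m \<in> Ev g t" using LL(1) nth_mem[OF assms(1)] by simp
  then obtain k n where "LL!m = (flow_point g k n, k)" "k < 3" "flow_point g k n \<le> t"
    unfolding Ev_def by blast
  moreover have "k = 2" using calculation assms(2) by (auto simp: isR_def)
  ultimately show ?thesis by auto
qed

lemma fin1: "finite {n. flow_point g 1 n \<le> t}" using fn by (simp add: fin_def)

lemma D3:
  assumes A: "snd x0 + int (Nle g 1 t) \<ge> v"
    and B: "\<And>n. flow_point g 2 n \<le> t \<Longrightarrow>
           fst x0 + int (Nlt g 0 (flow_point g 2 n)) + int (Nle g 1 t) - int (Nle g 1 (flow_point g 2 n)) \<ge> v"
  shows "snd (cascade_state x0 g t) \<ge> v"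
  unfolding cascade_foldl
proof (rule F3)
  show "snd x0 + cnt (\<lambda>e. snd e = 1) LL \<ge> v" using A cnt_all[of 1] by simp
next
  fix m assume m: "m < length LL" "isR (LL!m)"
  obtain n where n: "LL!m = (flow_point g 2 n, 2)" "flow_point g 2 n \<le> t"
    using reset_pos[OF m] by blast
  define \<sigma> where "\<sigma> = flow_point g 2 n"
  have s: "fst (LL!m) = \<sigma>" using n by (simp add: \<sigma>_def)
  have c0: "int (Nlt g 0 \<sigma>) \<le> cnt (\<lambda>e. snd e = 0) (take m LL)"
  proof -
    have "int (card ({e. snd e = 0 \<and> fst e < \<sigma>} \<inter> set LL)) \<le> cnt (\<lambda>e. snd e = 0) (take m LL)"
      using pos_before[OF LL(3) LL(2) m(1), of "\<lambda>e. snd e = 0"] s by simp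
    moreover have "card ({e. snd e = 0 \<and> fst e < \<sigma>} \<inter> set LL) = Nlt g 0 \<sigma>"
      unfolding LL(1) Nlt_def by (rule card_Ev_k[OF good]) (use n \<sigma>_def in auto)
    ultimately show ?thesis by simp
  qed
  have c1: "int (Nle g 1 t) - int (Nle g 1 \<sigma>) \<le> cnt (\<lambda>e. snd e = 1) (drop (Suc m) LL)"
  proof -
    have "int (card ({e. snd e = 1 \<and> fst e > \<sigma>} \<inter> set LL)) \<le> cnt (\<lambda>e. snd e = 1) (drop (Suc m) LL)"
      using pos_after[OF LL(3) LL(2) m(1), of "\<lambda>e. snd e = 1"] s by simp
    moreover have "{e. snd e = 1 \<and> fst e > \<sigma>} \<inter> Ev g t = {e. snd e = 1 \<and> (\<sigma> < fst e \<and> fst e \<le> t)} \<inter> Ev g t"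
      using Ev_fst_le by blast
    moreover have "card ({e. snd e = 1 \<and> (\<sigma> < fst e \<and> fst e \<le> t)} \<inter> Ev g t) = card {n. \<sigma> < flow_point g 1 n \<and> flow_point g 1 n \<le> t}"
      by (rule card_Ev_k[OF good]) auto
    moreover have "int (card {n. \<sigma> < flow_point g 1 n \<and> flow_point g 1 n \<le> t}) = int (Nle g 1 t) - int (Nle g 1 \<sigma>)"
      unfolding Nle_def by (rule card_between_lt[OF fin1]) (use n \<sigma>_def in auto)
    ultimately show ?thesis using LL(1) by simp
  qed
  show "fst x0 + cnt (\<lambda>e. snd e = 0) (take m LL) + cnt (\<lambda>e. snd e = 1) (drop (Suc m) LL) \<ge> v"
    using B[OF n(2)] c0 c1 unfolding \<sigma>_def by linarith
qed

lemma D4: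
  assumes n: "flow_point g 2 n \<le> t"
  shows "snd (cascade_state x0 g t) \<le> fst x0 + int (Nle g 0 t) + int (Nle g 1 t) - int (Nlt g 1 (flow_point g 2 n))"
proof -
  define \<sigma> where "\<sigma> = flow_point g 2 n"
  have "(\<sigma>, 2) \<in> set LL" using n LL(1) unfolding Ev_def \<sigma>_def by auto
  then obtain m where m: "m < length LL" "LL!m = (\<sigma>, 2)" by (auto simp: in_set_conv_nth)
  have R: "isR (LL!m)" using m by (simp add: isR_def)
  have s: "fst (LL!m) = \<sigma>" using m by simp
  have c0: "cnt (\<lambda>e. snd e = 0) (take (Suc m) LL) \<le> int (Nle g 0 t)"
    using cnt_take_le[of "\<lambda>e. snd e = 0" "Suc m" LL] cnt_all[of 0] by simp
  have c1: "cnt (\<lambda>e. snd e = 1) (drop (Suc m) LL) \<le> int (Nle g 1 t) - int (Nlt g 1 \<sigma>)"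
  proof -
    have "cnt (\<lambda>e. snd e = 1) (drop (Suc m) LL) \<le> int (card ({e. snd e = 1 \<and> fst e \<ge> \<sigma>} \<inter> set LL))"
      using pos_after_le[OF LL(3) LL(2) m(1), of "\<lambda>e. snd e = 1"] s by simp
    moreover have "{e. snd e = 1 \<and> fst e \<ge> \<sigma>} \<inter> Ev g t = {e. snd e = 1 \<and> (\<sigma> \<le> fst e \<and> fst e \<le> t)} \<inter> Ev g t"
      using Ev_fst_le by blast
    moreover have "card ({e. snd e = 1 \<and> (\<sigma> \<le> fst e \<and> fst e \<le> t)} \<inter> Ev g t) = card {n. \<sigma> \<le> flow_point g 1 n \<and> flow_point g 1 n \<le> t}"
      by (rule card_Ev_k[OF good]) auto
    moreover have "int (card {n. \<sigma> \<le> flow_point g 1 n \<and> flow_point g 1 n \<le> t}) = int (Nle g 1 t) - int (Nlt g 1 \<sigma>)"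
      unfolding Nle_def Nlt_def by (rule card_between_le[OF fin1]) (use n \<sigma>_def in auto)
    ultimately show ?thesis using LL(1) by simp
  qed
  show ?thesis unfolding cascade_foldl using F4[OF m(1) R, of x0] c0 c1 unfolding \<sigma>_def by linarith
qed

end

lemma fp_eq: "flow_point (\<lambda>k n. G k n \<omega>) k n = (\<Sum>i\<in>{k}\<times>{..n}. (\<lambda>(k, n). G k n) i \<omega>)"
proof -
  have "{k}\<times>{..n} = Pair k ` {..n}" by auto
  then show ?thesis unfolding flow_point_def by (simp add: sum.reindex inj_on_def)
qed

locale casc = prob_space M for M :: "'a measure" +
  fixes G :: "nat \<Rightarrow> nat \<Rightarrow> 'a \<Rightarrow> real" and l1 l2 b :: real
  assumes l1: "l1 > 0" and l2: "l2 > 0" and b: "b > 0"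
    and ind: "indep_vars (\<lambda>_. borel) (\<lambda>(k, n). G k n) ({..<3} \<times> UNIV)"
    and dist: "\<And>k n. k < 3 \<Longrightarrow>
           distributed M lborel (G k n) (\<lambda>s. ennreal (exponential_density (flow_rate l1 l2 b k) s))"
begin

definition SS :: "nat \<Rightarrow> nat \<Rightarrow> 'a \<Rightarrow> real" where
  "SS k n \<omega> = flow_point (\<lambda>k n. G k n \<omega>) k n"

lemma rate_pos: "flow_rate l1 l2 b k > 0"
  using l1 l2 b by (simp add: flow_rate_def)

lemma G_meas[measurable]: "k < 3 \<Longrightarrow> G k n \<in> borel_measurable M"
  using distributed_measurable[OF dist] by simp

lemma SS_meas[measurable]: "k < 3 \<Longrightarrow> SS k n \<in> borel_measurable M"
  unfolding SS_def flow_point_def by measurable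

lemma SS_erlang: "k < 3 \<Longrightarrow> distributed M lborel (SS k n) (erlang_density n (flow_rate l1 l2 b k))"
proof -
  assume k: "k < 3"
  have "distributed M lborel (\<lambda>x. \<Sum>i\<in>{k}\<times>{..n}. (\<lambda>(k, n). G k n) i x) (erlang_density (card ({k}\<times>{..n}) - 1) (flow_rate l1 l2 b k))"
  proof (rule exponential_distributed_sum)
    show "finite ({k}\<times>{..n})" by simp
    show "{k}\<times>{..n} \<noteq> {}" by simp
    show "0 < flow_rate l1 l2 b k" by (rule rate_pos)
    show "distributed M lborel ((\<lambda>(k, n). G k n) i) (exponential_density (flow_rate l1 l2 b k))"
      if "i \<in> {k}\<times>{..n}" for i
      using that dist[OF k] by auto
    show "indep_vars (\<lambda>i. borel) (\<lambda>(k, n). G k n) ({k}\<times>{..n})"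
      by (rule indep_vars_subset[OF ind]) (use k in auto)
  qed
  moreover have "card ({k}\<times>{..n}) - 1 = n" by (simp add: card_cartesian_product)
  moreover have "SS k n = (\<lambda>x. flow_point (\<lambda>k n. G k n x) k n)" by (simp add: fun_eq_iff SS_def)
  ultimately show ?thesis by (simp add: fp_eq[symmetric])
qed

lemma SS_cheb:
  assumes k: "k < 3" and a: "a > 0"
  shows "prob {\<omega>\<in>space M. \<bar>SS k n \<omega> - (n+1)/flow_rate l1 l2 b k\<bar> \<ge> a}
         \<le> ((n+1)/(flow_rate l1 l2 b k)^2) / a^2"
proof -
  note D = SS_erlang[OF k, of n]
  have l: "flow_rate l1 l2 b k > 0" by (rule rate_pos)
  have E: "expectation (SS k n) = (n+1)/flow_rate l1 l2 b k"
    using erlang_ith_moment[OF l D, of 1] by (simp add: fact_Suc)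
  have V: "variance (SS k n) = (n+1)/(flow_rate l1 l2 b k)^2"
    using erlang_distributed_variance[OF l D] by simp
  have "prob {\<omega>\<in>space M. \<bar>SS k n \<omega> - expectation (SS k n)\<bar> \<ge> a} \<le> variance (SS k n) / a^2"
    by (rule Chebyshev_inequality) (use erlang_ith_moment_integrable[OF l D, of 2] a k in auto)
  then show ?thesis using E V by (simp add: add.commute)
qed

lemma SS_sum: "SS k n \<omega> = (\<Sum>i\<in>{k}\<times>{..n}. (\<lambda>(k, n). G k n) i \<omega>)"
  by (simp add: SS_def fp_eq)

end

lemma (in prob_space) indep_eq_null:
  fixes X Y :: "'a \<Rightarrow> real"
  assumes ind: "indep_var borel X borel Y" and D: "distributed M lborel X f"
  shows "prob {\<omega>\<in>space M. X \<omega> = Y \<omega>} = 0"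
proof -
  have rvX[measurable]: "X \<in> borel_measurable M" and rvY[measurable]: "Y \<in> borel_measurable M"
    using ind by (auto simp: indep_var_distribution_eq)
  let ?MX = "distr M borel X" and ?MY = "distr M borel Y"
  interpret MX: prob_space ?MX by (rule prob_space_distr) simp
  interpret MY: prob_space ?MY by (rule prob_space_distr) simp
  interpret PP: pair_prob_space ?MX ?MY ..
  define D where "D = {p \<in> space (borel \<Otimes>\<^sub>M borel). fst p = (snd p :: real)}"
  have Dm: "D \<in> sets (borel \<Otimes>\<^sub>M borel)" unfolding D_def by measurable
  have Dm2: "{p. fst p = (snd p::real)} \<in> sets (borel \<Otimes>\<^sub>M borel)" using Dm by (simp add: D_def space_pair_measure)
  have "emeasure M {\<omega>\<in>space M. X \<omega> = Y \<omega>} = emeasure (distr M (borel \<Otimes>\<^sub>M borel) (\<lambda>\<omega>. (X \<omega>, Y \<omega>))) D"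
    by (subst emeasure_distr) (auto simp: D_def Dm2 space_pair_measure intro!: arg_cong[where f="emeasure M"])
  also have "distr M (borel \<Otimes>\<^sub>M borel) (\<lambda>\<omega>. (X \<omega>, Y \<omega>)) = ?MX \<Otimes>\<^sub>M ?MY"
    using ind by (simp add: indep_var_distribution_eq)
  also have "emeasure (?MX \<Otimes>\<^sub>M ?MY) D = (\<integral>\<^sup>+y. emeasure ?MX ((\<lambda>x. (x, y)) -` D) \<partial>?MY)"
    by (rule PP.emeasure_pair_measure_alt2) (simp add: Dm)
  also have "\<dots> = (\<integral>\<^sup>+y. 0 \<partial>?MY)"
  proof (rule nn_integral_cong)
    fix y
    have "(\<lambda>x. (x, y)) -` D = {y}" by (auto simp: D_def space_pair_measure)
    moreover have "?MX = distr M lborel X" by (rule distr_cong) auto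
    moreover have "distr M lborel X = density lborel f" by (rule distributed_distr_eq_density[OF D])
    moreover have "emeasure (density lborel f) {y} = 0"
      using distributed_borel_measurable[OF D] by (subst emeasure_density) (auto intro!: nn_integral_null_set simp: null_sets_def)
    ultimately show "emeasure ?MX ((\<lambda>x. (x, y)) -` D) = 0" by simp
  qed
  finally show ?thesis by (simp add: measure_def)
qed

context casc
begin

lemma SS_indep:
  assumes k: "k < 3" "k' < 3" "k \<noteq> k'"
  shows "indep_var borel (SS k n) borel (SS k' n')"
proof -
  define X where "X = (\<lambda>(k, n). G k n)"
  define A where "A = {k}\<times>{..n}"
  define B where "B = {k'}\<times>{..n'}"
  have "indep_var
    borel ((\<lambda>f. \<Sum>i\<in>A. f i) \<circ> (\<lambda>\<omega>. restrict (\<lambda>i. X i \<omega>) A))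
    borel ((\<lambda>f. \<Sum>i\<in>B. f i) \<circ> (\<lambda>\<omega>. restrict (\<lambda>i. X i \<omega>) B))"
    using k unfolding X_def A_def B_def
    by (intro indep_var_compose[OF indep_var_restrict[OF ind]]) auto
  also have "((\<lambda>f. \<Sum>i\<in>A. f i) \<circ> (\<lambda>\<omega>. restrict (\<lambda>i. X i \<omega>) A)) = SS k n"
    by (auto simp: fun_eq_iff SS_sum A_def X_def)
  also have "((\<lambda>f. \<Sum>i\<in>B. f i) \<circ> (\<lambda>\<omega>. restrict (\<lambda>i. X i \<omega>) B)) = SS k' n'"
    by (auto simp: fun_eq_iff SS_sum B_def X_def)
  finally show ?thesis .
qed

lemma AE_good: "AE \<omega> in M. goodg (\<lambda>k n. G k n \<omega>)"
proof -
  have a: "AE \<omega> in M. G k n \<omega> > 0" if k: "k < 3" for k n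
  proof -
    have "prob {\<omega>\<in>space M. G k n \<omega> \<le> 0} = 1 - exp (- 0 * flow_rate l1 l2 b k)"
      by (rule exponential_distributedD_le[OF dist[OF k]]) (auto intro: rate_pos)
    then have "prob {\<omega>\<in>space M. G k n \<omega> \<le> 0} = 0" by simp
    moreover have "{\<omega>\<in>space M. G k n \<omega> \<le> 0} \<in> events" using G_meas[OF k] by measurable
    ultimately show ?thesis by (subst (asm) prob_eq_0) (auto simp: not_le)
  qed
  have c: "AE \<omega> in M. SS k n \<omega> \<noteq> SS k' n' \<omega>" if k: "k < 3" "k' < 3" "k \<noteq> k'" for k k' n n'
  proof -
    have "prob {\<omega>\<in>space M. SS k n \<omega> = SS k' n' \<omega>} = 0"
      by (rule indep_eq_null[OF SS_indep[OF k] SS_erlang[OF k(1)]])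
    then show ?thesis by (subst (asm) prob_eq_0) (auto simp: k)
  qed
  have "AE \<omega> in M. \<forall>k n. k < 3 \<longrightarrow> G k n \<omega> > 0"
    using a by (subst AE_all_countable, intro allI, subst AE_all_countable) auto
  moreover have "AE \<omega> in M. \<forall>k k' n n'. k < 3 \<longrightarrow> k' < 3 \<longrightarrow> k \<noteq> k' \<longrightarrow> SS k n \<omega> \<noteq> SS k' n' \<omega>"
    using c by (auto simp: AE_all_countable)
  ultimately show ?thesis
    by eventually_elim (auto simp: goodg_def SS_def)
qed

end

definition whp :: "'a measure \<Rightarrow> (real \<Rightarrow> 'a \<Rightarrow> bool) \<Rightarrow> bool" where
  "whp M P \<longleftrightarrow> (\<forall>\<epsilon>>0. eventually (\<lambda>t. \<exists>B\<in>sets M. {\<omega>\<in>space M. \<not> P t \<omega>} \<subseteq> B \<and> measure M B \<le> \<epsilon>) at_top)"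

context prob_space
begin

lemma whp_conj:
  assumes "whp M P" "whp M Q"
  shows "whp M (\<lambda>t \<omega>. P t \<omega> \<and> Q t \<omega>)"
  unfolding whp_def
proof (intro allI impI)
  fix \<epsilon> :: real assume e: "\<epsilon> > 0"
  have e2: "\<epsilon>/2 > 0" using e by simp
  have "eventually (\<lambda>t. \<exists>B\<in>sets M. {\<omega>\<in>space M. \<not> P t \<omega>} \<subseteq> B \<and> measure M B \<le> \<epsilon>/2) at_top"
    using assms(1) e2 unfolding whp_def by blast
  moreover have "eventually (\<lambda>t. \<exists>B\<in>sets M. {\<omega>\<in>space M. \<not> Q t \<omega>} \<subseteq> B \<and> measure M B \<le> \<epsilon>/2) at_top"
    using assms(2) e2 unfolding whp_def by blast
  ultimately show "eventually (\<lambda>t. \<exists>B\<in>sets M. {\<omega>\<in>space M. \<not> (P t \<omega> \<and> Q t \<omega>)} \<subseteq> B \<and> measure M B \<le> \<epsilon>) at_top"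
  proof eventually_elim
    case (elim t)
    then obtain B1 B2 where B: "B1 \<in> sets M" "{\<omega>\<in>space M. \<not> P t \<omega>} \<subseteq> B1" "measure M B1 \<le> \<epsilon>/2"
      "B2 \<in> sets M" "{\<omega>\<in>space M. \<not> Q t \<omega>} \<subseteq> B2" "measure M B2 \<le> \<epsilon>/2" by blast
    have "measure M (B1 \<union> B2) \<le> measure M B1 + measure M B2"
      using B by (intro measure_Un_le) auto
    then show ?case using B by (intro bexI[of _ "B1 \<union> B2"]) auto
  qed
qed

lemma whp_mono_ev:
  assumes "whp M P" "eventually (\<lambda>t. \<forall>\<omega>\<in>space M. P t \<omega> \<longrightarrow> Q t \<omega>) at_top"
  shows "whp M Q"
  unfolding whp_def
proof (intro allI impI)
  fix \<epsilon> :: real assume e: "\<epsilon> > 0"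
  have "eventually (\<lambda>t. \<exists>B\<in>sets M. {\<omega>\<in>space M. \<not> P t \<omega>} \<subseteq> B \<and> measure M B \<le> \<epsilon>) at_top"
    using assms(1) e unfolding whp_def by simp
  with assms(2) show "eventually (\<lambda>t. \<exists>B\<in>sets M. {\<omega>\<in>space M. \<not> Q t \<omega>} \<subseteq> B \<and> measure M B \<le> \<epsilon>) at_top"
    by eventually_elim blast
qed

lemma whp_mono:
  assumes "whp M P" "\<And>t \<omega>. \<omega> \<in> space M \<Longrightarrow> P t \<omega> \<Longrightarrow> Q t \<omega>"
  shows "whp M Q"
  using assms by (intro whp_mono_ev[OF assms(1)]) auto

lemma whp_ev:
  assumes "eventually P at_top"
  shows "whp M (\<lambda>t \<omega>. P t)"
  unfolding whp_def
proof (intro allI impI)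
  fix \<epsilon> :: real assume e: "\<epsilon> > 0"
  from assms show "eventually (\<lambda>t. \<exists>B\<in>sets M. {\<omega>\<in>space M. \<not> P t} \<subseteq> B \<and> measure M B \<le> \<epsilon>) at_top"
    by eventually_elim (use e in \<open>auto intro!: bexI[of _ "{}"]\<close>)
qed

lemma whp_AE:
  assumes "AE \<omega> in M. R \<omega>" "whp M (\<lambda>t \<omega>. R \<omega> \<longrightarrow> Q t \<omega>)"
  shows "whp M Q"
  unfolding whp_def
proof (intro allI impI)
  fix \<epsilon> :: real assume e: "\<epsilon> > 0"
  obtain N where N: "N \<in> null_sets M" "{\<omega>\<in>space M. \<not> R \<omega>} \<subseteq> N"
    using assms(1) by (auto simp: eventually_ae_filter)
  have "eventually (\<lambda>t. \<exists>B\<in>sets M. {\<omega>\<in>space M. \<not> (R \<omega> \<longrightarrow> Q t \<omega>)} \<subseteq> B \<and> measure M B \<le> \<epsilon>) at_top"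
    using assms(2) e unfolding whp_def by simp
  then show "eventually (\<lambda>t. \<exists>B\<in>sets M. {\<omega>\<in>space M. \<not> Q t \<omega>} \<subseteq> B \<and> measure M B \<le> \<epsilon>) at_top"
  proof eventually_elim
    case (elim t)
    then obtain B where B: "B \<in> sets M" "{\<omega>\<in>space M. \<not> (R \<omega> \<longrightarrow> Q t \<omega>)} \<subseteq> B" "measure M B \<le> \<epsilon>" by blast
    have "measure M (B \<union> N) \<le> measure M B + measure M N"
      using B N by (intro measure_Un_le) auto
    moreover have "measure M N = 0" using N by (simp add: null_sets_def measure_def)
    ultimately have "measure M (B \<union> N) \<le> \<epsilon>" using B by simp
    moreover have "{\<omega>\<in>space M. \<not> Q t \<omega>} \<subseteq> B \<union> N" using B N by blast
    ultimately show ?case using B N by (intro bexI[of _ "B \<union> N"]) auto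
  qed
qed

lemma whp_all:
  assumes "\<And>j. j < (J::nat) \<Longrightarrow> whp M (P j)"
  shows "whp M (\<lambda>t \<omega>. \<forall>j<J. P j t \<omega>)"
  using assms
proof (induction J)
  case 0
  then show ?case using whp_ev[of "\<lambda>_. True"] by simp
next
  case (Suc J)
  have "whp M (\<lambda>t \<omega>. (\<forall>j<J. P j t \<omega>) \<and> P J t \<omega>)"
    using Suc by (intro whp_conj) auto
  then show ?case by (rule whp_mono) (auto simp: less_Suc_eq)
qed

lemma whp_conv:
  assumes "\<And>\<epsilon>. \<epsilon> > 0 \<Longrightarrow> whp M (\<lambda>t \<omega>. \<bar>X t \<omega> - c\<bar> \<le> \<epsilon>)"
  shows "conv_in_prob M X c"
  unfolding conv_in_prob_def
proof (intro allI impI)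
  fix \<epsilon> :: real assume e: "\<epsilon> > 0"
  show "((\<lambda>t. outer_prob M {\<omega> \<in> space M. \<epsilon> < \<bar>X t \<omega> - c\<bar>}) \<longlongrightarrow> 0) at_top"
  proof (rule tendstoI)
    fix r :: real assume r: "r > 0"
    have "eventually (\<lambda>t. \<exists>B\<in>sets M. {\<omega>\<in>space M. \<not> \<bar>X t \<omega> - c\<bar> \<le> \<epsilon>} \<subseteq> B \<and> measure M B \<le> r/2) at_top"
      using assms[OF e] half_gt_zero[OF r] unfolding whp_def by blast
    then show "eventually (\<lambda>t. dist (outer_prob M {\<omega> \<in> space M. \<epsilon> < \<bar>X t \<omega> - c\<bar>}) 0 < r) at_top"
    proof eventually_elim
      case (elim t)
      then obtain B where B: "B \<in> sets M" "{\<omega>\<in>space M. \<not> \<bar>X t \<omega> - c\<bar> \<le> \<epsilon>} \<subseteq> B" "measure M B \<le> r/2" by blast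
      let ?A = "{\<omega> \<in> space M. \<epsilon> < \<bar>X t \<omega> - c\<bar>}"
      let ?S = "{B \<in> sets M. ?A \<inter> space M \<subseteq> B}"
      have ne: "?S \<noteq> {}" by auto
      have bdd: "bdd_below (measure M ` ?S)" by (intro bdd_belowI[where m=0]) auto
      have "outer_prob M ?A \<le> measure M B"
        unfolding outer_prob_def by (rule cINF_lower[OF bdd]) (use B in auto)
      moreover have "outer_prob M ?A \<ge> 0"
        unfolding outer_prob_def by (rule cINF_greatest[OF ne]) auto
      ultimately show ?case using B r by simp
    qed
  qed
qed

end

context casc
begin

abbreviation "rt k \<equiv> flow_rate l1 l2 b k"

lemma cheb_whp:
  assumes k: "k < 3" and D: "D > 0" and A: "A \<ge> 0" and B: "B \<ge> 0"
    and m: "eventually (\<lambda>t. real (m t) + 1 \<le> A*t + B) at_top"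
  shows "whp M (\<lambda>t \<omega>. \<bar>SS k (m t) \<omega> - (real (m t) + 1)/rt k\<bar> < D*t/rt k)"
  unfolding whp_def
proof (intro allI impI)
  fix \<epsilon> :: real assume e: "\<epsilon> > 0"
  have l: "rt k > 0" by (rule rate_pos)
  have lim: "((\<lambda>t. (A + B)/(D^2 * t)) \<longlongrightarrow> 0) at_top"
    by (rule tendsto_divide_0[OF tendsto_const], rule filterlim_at_top_imp_at_infinity,
        rule filterlim_tendsto_pos_mult_at_top[OF tendsto_const _ filterlim_ident]) (use D in simp)
  then have "eventually (\<lambda>t. (A + B)/(D^2 * t) < \<epsilon>) at_top"
    using e by (rule order_tendstoD)
  moreover have "eventually (\<lambda>t. t \<ge> (1::real)) at_top" by (rule eventually_ge_at_top)
  ultimately show "eventually (\<lambda>t. \<exists>Bs\<in>sets M. {\<omega>\<in>space M. \<not> \<bar>SS k (m t) \<omega> - (real (m t) + 1)/rt k\<bar> < D*t/rt k} \<subseteq> Bs \<and> measure M Bs \<le> \<epsilon>) at_top"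
    using m
  proof eventually_elim
    case (elim t)
    define Bs where "Bs = {\<omega>\<in>space M. \<bar>SS k (m t) \<omega> - (real (m t) + 1)/rt k\<bar> \<ge> D*t/rt k}"
    have Bm: "Bs \<in> sets M" unfolding Bs_def using SS_meas[OF k] by measurable
    have pos: "D*t/rt k > 0" using D l elim by simp
    have "measure M Bs \<le> ((real (m t) + 1)/(rt k)^2) / (D*t/rt k)^2"
      unfolding Bs_def using SS_cheb[OF k pos, of "m t"] by (simp add: add.commute)
    also have "\<dots> = (real (m t) + 1) / (D^2 * t^2)"
      using l D elim by (simp add: field_simps power2_eq_square)
    also have "\<dots> \<le> (A*t + B) / (D^2 * t^2)"
      using elim D by (intro divide_right_mono) auto
    also have "\<dots> \<le> (A*t + B*t) / (D^2 * t^2)"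
      using elim D B mult_left_mono[of 1 t B] by (intro divide_right_mono) auto
    also have "\<dots> = (A + B)/(D^2 * t)"
      using elim D by (simp add: field_simps power2_eq_square)
    also have "\<dots> \<le> \<epsilon>" using elim by simp
    finally show ?case using Bm by (intro bexI[of _ Bs]) (auto simp: Bs_def not_less)
  qed
qed

end

lemma upper_det:
  assumes g: "goodg g" and k: "k < 3" and m: "flow_point g k m > s"
  shows "finite {n. flow_point g k n \<le> s} \<and> Nle g k s \<le> m"
proof -
  have mono: "mono (flow_point g k)" using fp_smono[OF g k] by (rule strict_mono_mono)
  have "{n. flow_point g k n \<le> s} \<subseteq> {..<m}"
  proof
    fix n assume n: "n \<in> {n. flow_point g k n \<le> s}"
    show "n \<in> {..<m}"
    proof (rule ccontr)
      assume "n \<notin> {..<m}"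
      then have "flow_point g k m \<le> flow_point g k n" using mono by (auto simp: mono_def)
      then show False using n m by simp
    qed
  qed
  then show ?thesis unfolding Nle_def using card_mono[of "{..<m}"] finite_subset by fastforce
qed

lemma lower_det:
  assumes g: "goodg g" and k: "k < 3" and m: "flow_point g k m < s"
    and f: "finite {n. flow_point g k n \<le> s}"
  shows "Nlt g k s \<ge> Suc m"
proof -
  have mono: "mono (flow_point g k)" using fp_smono[OF g k] by (rule strict_mono_mono)
  have "{..m} \<subseteq> {n. flow_point g k n < s}"
  proof
    fix n assume "n \<in> {..m}"
    then have "flow_point g k n \<le> flow_point g k m" using mono by (auto simp: mono_def)
    then show "n \<in> {n. flow_point g k n < s}" using m by simp
  qed
  moreover have "finite {n. flow_point g k n < s}" by (rule finite_subset[OF _ f]) auto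
  ultimately show ?thesis unfolding Nlt_def using card_mono[of "{n. flow_point g k n < s}" "{..m}"] by simp
qed

context casc
begin

abbreviation gw :: "'a \<Rightarrow> nat \<Rightarrow> nat \<Rightarrow> real" where "gw \<omega> \<equiv> (\<lambda>k n. G k n \<omega>)"

lemma whp_U:
  assumes k: "k < 3" and c: "c \<ge> 0" and d: "\<delta> > 0"
  shows "whp M (\<lambda>t \<omega>. goodg (gw \<omega>) \<longrightarrow> finite {n. flow_point (gw \<omega>) k n \<le> c*t}
                        \<and> real (Nle (gw \<omega>) k (c*t)) \<le> (c * rt k + \<delta>)*t)"
proof -
  have l: "rt k > 0" by (rule rate_pos)
  define A where "A = c * rt k + \<delta>"
  have A: "A \<ge> 0" using c l d by (simp add: A_def)
  define m where "m t = nat \<lfloor>A*t\<rfloor>" for t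
  have ev: "eventually (\<lambda>t. real (m t) + 1 \<le> A*t + 1) at_top"
    using eventually_ge_at_top[of "0::real"]
  proof eventually_elim
    case (elim t) then show ?case using A by (simp add: m_def)
  qed
  have W: "whp M (\<lambda>t \<omega>. \<bar>SS k (m t) \<omega> - (real (m t) + 1)/rt k\<bar> < \<delta>*t/rt k)"
    by (rule cheb_whp[OF k d A _ ev]) simp
  show ?thesis
  proof (rule whp_mono_ev[OF W])
    show "eventually (\<lambda>t. \<forall>\<omega>\<in>space M. \<bar>SS k (m t) \<omega> - (real (m t) + 1)/rt k\<bar> < \<delta>*t/rt k \<longrightarrow>
      (goodg (gw \<omega>) \<longrightarrow> finite {n. flow_point (gw \<omega>) k n \<le> c*t} \<and> real (Nle (gw \<omega>) k (c*t)) \<le> (c * rt k + \<delta>)*t)) at_top"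
      using eventually_ge_at_top[of "0::real"]
    proof eventually_elim
      case (elim t)
      show ?case
      proof (intro ballI impI)
        fix \<omega> assume "\<bar>SS k (m t) \<omega> - (real (m t) + 1)/rt k\<bar> < \<delta>*t/rt k" and g: "goodg (gw \<omega>)"
        then have s1: "SS k (m t) \<omega> > (real (m t) + 1)/rt k - \<delta>*t/rt k" by linarith
        have "A*t \<ge> 0" using A elim by simp
        then have "real (m t) + 1 > A*t" unfolding m_def by linarith
        then have "(real (m t) + 1)/rt k > A*t/rt k" using l by (simp add: divide_strict_right_mono)
        also have "A*t/rt k = c*t + \<delta>*t/rt k" using l by (simp add: A_def field_simps)
        finally have "SS k (m t) \<omega> > c*t" using s1 by linarith
        then have u: "finite {n. flow_point (gw \<omega>) k n \<le> c*t} \<and> Nle (gw \<omega>) k (c*t) \<le> m t"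
          by (intro upper_det[OF g k]) (simp add: SS_def)
        moreover have "real (m t) \<le> A*t" unfolding m_def using \<open>A*t \<ge> 0\<close> by linarith
        ultimately show "finite {n. flow_point (gw \<omega>) k n \<le> c*t} \<and> real (Nle (gw \<omega>) k (c*t)) \<le> (c * rt k + \<delta>)*t"
          unfolding A_def by (meson of_nat_le_iff order_trans)
      qed
    qed
  qed
qed

lemma whp_L:
  assumes k: "k < 3" and c: "c \<ge> 0" and d: "\<delta> > 0"
  shows "whp M (\<lambda>t \<omega>. goodg (gw \<omega>) \<and> finite {n. flow_point (gw \<omega>) k n \<le> c*t}
                        \<longrightarrow> real (Nlt (gw \<omega>) k (c*t)) \<ge> (c * rt k - \<delta>)*t)"
proof (cases "c * rt k \<le> \<delta>")
  case True
  have "whp M (\<lambda>t \<omega>. t \<ge> 0)" by (rule whp_ev) (rule eventually_ge_at_top)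
  then show ?thesis
  proof (rule whp_mono)
    fix t \<omega> assume "t \<ge> (0::real)"
    then have "(c * rt k - \<delta>)*t \<le> 0" using True by (simp add: mult_nonpos_nonneg)
    then show "goodg (gw \<omega>) \<and> finite {n. flow_point (gw \<omega>) k n \<le> c*t}
                        \<longrightarrow> real (Nlt (gw \<omega>) k (c*t)) \<ge> (c * rt k - \<delta>)*t" by simp
  qed
next
  case False
  have l: "rt k > 0" by (rule rate_pos)
  define A where "A = c * rt k - \<delta>"
  have A: "A \<ge> 0" using False by (simp add: A_def)
  define m where "m t = nat \<lceil>A*t\<rceil>" for t
  have ev: "eventually (\<lambda>t. real (m t) + 1 \<le> A*t + 2) at_top"
    using eventually_ge_at_top[of "0::real"]
  proof eventually_elim
    case (elim t) then show ?case using A by (simp add: m_def) linarith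
  qed
  have d2: "\<delta>/2 > 0" using d by simp
  have W: "whp M (\<lambda>t \<omega>. \<bar>SS k (m t) \<omega> - (real (m t) + 1)/rt k\<bar> < (\<delta>/2)*t/rt k)"
    by (rule cheb_whp[OF k d2 A _ ev]) simp
  show ?thesis
  proof (rule whp_mono_ev[OF W])
    show "eventually (\<lambda>t. \<forall>\<omega>\<in>space M. \<bar>SS k (m t) \<omega> - (real (m t) + 1)/rt k\<bar> < (\<delta>/2)*t/rt k \<longrightarrow>
      (goodg (gw \<omega>) \<and> finite {n. flow_point (gw \<omega>) k n \<le> c*t}
                        \<longrightarrow> real (Nlt (gw \<omega>) k (c*t)) \<ge> (c * rt k - \<delta>)*t)) at_top"
      using eventually_gt_at_top[of "4/\<delta>"]
    proof eventually_elim
      case (elim t)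
      have t0: "t > 0" using elim d by (smt (verit) divide_pos_pos)
      show ?case
      proof (intro ballI impI)
        fix \<omega> assume a: "\<bar>SS k (m t) \<omega> - (real (m t) + 1)/rt k\<bar> < (\<delta>/2)*t/rt k"
          and g: "goodg (gw \<omega>) \<and> finite {n. flow_point (gw \<omega>) k n \<le> c*t}"
        then have s1: "SS k (m t) \<omega> < (real (m t) + 1)/rt k + (\<delta>/2)*t/rt k" by linarith
        have "A*t \<ge> 0" using A t0 by simp
        then have "real (m t) + 1 \<le> A*t + 2" unfolding m_def by linarith
        then have "(real (m t) + 1)/rt k \<le> (A*t + 2)/rt k" using l by (simp add: divide_right_mono)
        then have "SS k (m t) \<omega> < (A*t + 2)/rt k + (\<delta>/2)*t/rt k" using s1 by linarith
        also have "(A*t + 2)/rt k + (\<delta>/2)*t/rt k = c*t - ((\<delta>/2)*t - 2)/rt k"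
          using l by (simp add: A_def field_simps)
        also have "\<dots> < c*t"
        proof -
          have "\<delta>*t > 4" using elim d by (simp add: field_simps)
          then have "(\<delta>/2)*t - 2 > 0" by simp
          then show ?thesis using l by simp
        qed
        finally have "flow_point (gw \<omega>) k (m t) < c*t" by (simp add: SS_def)
        then have "Nlt (gw \<omega>) k (c*t) \<ge> Suc (m t)" using lower_det g k by blast
        moreover have "real (m t) \<ge> A*t" unfolding m_def by linarith
        ultimately show "real (Nlt (gw \<omega>) k (c*t)) \<ge> (c * rt k - \<delta>)*t"
          unfolding A_def by (smt (verit) of_nat_Suc of_nat_le_iff)
      qed
    qed
  qed
qed

end

lemma fp_pos: "goodg g \<Longrightarrow> k < 3 \<Longrightarrow> flow_point g k n > 0"
  unfolding flow_point_def goodg_def by (intro sum_pos) auto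

lemma fin_sub: "finite {n. flow_point g k n \<le> t} \<Longrightarrow> s \<le> t \<Longrightarrow> finite {n. flow_point g k n \<le> s}"
  by (rule finite_subset[rotated]) auto

lemma fin_sub_lt: "finite {n. flow_point g k n \<le> t} \<Longrightarrow> s \<le> t \<Longrightarrow> finite {n. flow_point g k n < s}"
  by (rule finite_subset[rotated]) auto

lemma Nlt_mono: "s \<le> s' \<Longrightarrow> finite {n. flow_point g k n \<le> s'} \<Longrightarrow> Nlt g k s \<le> Nlt g k s'"
  unfolding Nlt_def by (rule card_mono) (auto intro: fin_sub_lt)

lemma Nle_mono: "s \<le> s' \<Longrightarrow> finite {n. flow_point g k n \<le> s'} \<Longrightarrow> Nle g k s \<le> Nle g k s'"
  unfolding Nle_def by (rule card_mono) auto

lemma Nlt_le: "finite {n. flow_point g k n \<le> s} \<Longrightarrow> Nlt g k s \<le> Nle g k s"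
  unfolding Nle_def Nlt_def by (rule card_mono) auto

lemma exists_between:
  assumes "finite {n. flow_point g k n < a}" "Nlt g k a < Nle g k t"
  shows "\<exists>n. flow_point g k n \<le> t \<and> \<not> flow_point g k n < a"
proof (rule ccontr)
  assume "\<not> ?thesis"
  then have "{n. flow_point g k n \<le> t} \<subseteq> {n. flow_point g k n < a}" by auto
  then have "Nle g k t \<le> Nlt g k a" unfolding Nle_def Nlt_def using assms(1) by (rule card_mono[rotated])
  then show False using assms(2) by simp
qed

lemma discr:
  assumes "0 < \<sigma>" "\<sigma> \<le> t" "J > (0::nat)"
  shows "\<exists>j<J. (real j / J) * t \<le> \<sigma> \<and> \<sigma> \<le> (real (Suc j) / J) * t"
proof -
  have t: "t > 0" using assms by simp
  define x where "x = \<sigma> * J / t"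
  have x0: "x > 0" using assms t by (simp add: x_def)
  have xJ: "x \<le> J" using assms t by (simp add: x_def field_simps)
  define j where "j = nat (\<lceil>x\<rceil> - 1)"
  have c1: "\<lceil>x\<rceil> \<ge> 1" using x0 by (simp add: one_le_ceiling zero_less_ceiling)
  have "int j = \<lceil>x\<rceil> - 1" using c1 unfolding j_def by (subst int_nat_eq) simp
  then have "real j = of_int \<lceil>x\<rceil> - 1" by (metis of_int_of_nat_eq of_int_diff of_int_1)
  then have j1: "real j < x" and j2: "x \<le> real (Suc j)" by linarith+
  have "\<lceil>x\<rceil> \<le> int J" using xJ by (simp add: ceiling_le_iff)
  then have jJ: "j < J" using c1 unfolding j_def by linarith
  have "(real j / J) * t \<le> \<sigma>"
  proof -
    have "real j / J * t \<le> x / J * t" using j1 t assms(3) by (intro mult_right_mono divide_right_mono) auto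
    also have "x / J * t = \<sigma>" using t assms(3) by (simp add: x_def)
    finally show ?thesis .
  qed
  moreover have "\<sigma> \<le> (real (Suc j) / J) * t"
  proof -
    have "\<sigma> = x / J * t" using t assms(3) by (simp add: x_def)
    also have "\<dots> \<le> real (Suc j) / J * t" using j2 t assms(3) by (intro mult_right_mono divide_right_mono) auto
    finally show ?thesis .
  qed
  ultimately show ?thesis using jJ by blast
qed

lemma num_div:
  fixes a c \<epsilon> t :: real
  assumes "t > 0" "\<bar>a - c*t\<bar> \<le> \<epsilon>*t"
  shows "\<bar>a/t - c\<bar> \<le> \<epsilon>"
proof -
  have "a/t - c = (a - c*t)/t" using assms(1) by (simp add: field_simps)
  then have "\<bar>a/t - c\<bar> = \<bar>a - c*t\<bar>/t" using assms(1) by simp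
  also have "\<dots> \<le> \<epsilon>*t/t" using assms by (intro divide_right_mono) auto
  finally show ?thesis using assms(1) by simp
qed

lemma ev_lin: "\<delta> > 0 \<Longrightarrow> eventually (\<lambda>t::real. t > 0 \<and> \<bar>a\<bar> \<le> \<delta>*t \<and> \<bar>a'\<bar> \<le> \<delta>*t) at_top"
proof -
  assume d: "\<delta> > 0"
  show ?thesis using eventually_gt_at_top[of "max 0 (max \<bar>a\<bar> \<bar>a'\<bar> / \<delta>)"]
  proof eventually_elim
    case (elim t)
    then have "max \<bar>a\<bar> \<bar>a'\<bar> / \<delta> < t" by simp
    then have "max \<bar>a\<bar> \<bar>a'\<bar> < \<delta>*t" using d by (simp add: field_simps)
    then show ?case using elim by auto
  qed
qed

context casc
begin

lemma rt_simps: "rt 0 = l1" "rt 1 = l2" "rt 2 = b" "rt (Suc 0) = l2" "rt (Suc (Suc 0)) = b"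
  by (simp_all add: flow_rate_def)

lemma fin_whp: "whp M (\<lambda>t \<omega>. goodg (gw \<omega>) \<longrightarrow> fin (gw \<omega>) t)"
proof -
  have "whp M (\<lambda>t \<omega>. \<forall>k<3. goodg (gw \<omega>) \<longrightarrow> finite {n. flow_point (gw \<omega>) k n \<le> 1*t}
                        \<and> real (Nle (gw \<omega>) k (1*t)) \<le> (1 * rt k + 1)*t)"
    by (rule whp_all) (rule whp_U, auto)
  then show ?thesis by (rule whp_mono) (auto simp: fin_def)
qed

lemma conv_fst: "conv_in_prob M (\<lambda>t \<omega>. real_of_int (fst (cascade_state x0 (gw \<omega>) t)) / t) l1"
proof (rule whp_conv)
  fix \<epsilon> :: real assume e: "\<epsilon> > 0"
  define \<delta> where "\<delta> = \<epsilon>/2"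
  have d: "\<delta> > 0" using e by (simp add: \<delta>_def)
  have W: "whp M (\<lambda>t \<omega>. (goodg (gw \<omega>) \<longrightarrow> fin (gw \<omega>) t) \<and>
     ((goodg (gw \<omega>) \<longrightarrow> finite {n. flow_point (gw \<omega>) 0 n \<le> 1*t} \<and> real (Nle (gw \<omega>) 0 (1*t)) \<le> (1 * rt 0 + \<delta>)*t) \<and>
     ((goodg (gw \<omega>) \<and> finite {n. flow_point (gw \<omega>) 0 n \<le> 1*t} \<longrightarrow> real (Nlt (gw \<omega>) 0 (1*t)) \<ge> (1 * rt 0 - \<delta>)*t) \<and>
     (t > 0 \<and> \<bar>real_of_int (fst x0)\<bar> \<le> \<delta>*t \<and> \<bar>real_of_int (fst x0)\<bar> \<le> \<delta>*t))))"
    by (intro whp_conj fin_whp whp_U whp_L whp_ev ev_lin d) auto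
  have "whp M (\<lambda>t \<omega>. goodg (gw \<omega>) \<longrightarrow> \<bar>real_of_int (fst (cascade_state x0 (gw \<omega>) t)) / t - l1\<bar> \<le> \<epsilon>)"
    using W
  proof (rule whp_mono, intro impI)
    fix t \<omega>
    assume H: "(goodg (gw \<omega>) \<longrightarrow> fin (gw \<omega>) t) \<and>
     ((goodg (gw \<omega>) \<longrightarrow> finite {n. flow_point (gw \<omega>) 0 n \<le> 1*t} \<and> real (Nle (gw \<omega>) 0 (1*t)) \<le> (1 * rt 0 + \<delta>)*t) \<and>
     ((goodg (gw \<omega>) \<and> finite {n. flow_point (gw \<omega>) 0 n \<le> 1*t} \<longrightarrow> real (Nlt (gw \<omega>) 0 (1*t)) \<ge> (1 * rt 0 - \<delta>)*t) \<and>
     (t > 0 \<and> \<bar>real_of_int (fst x0)\<bar> \<le> \<delta>*t \<and> \<bar>real_of_int (fst x0)\<bar> \<le> \<delta>*t)))"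
      and g: "goodg (gw \<omega>)"
    have fn: "fin (gw \<omega>) t" using H g by blast
    have f0: "finite {n. flow_point (gw \<omega>) 0 n \<le> t}" using fn by (simp add: fin_def)
    have U: "real (Nle (gw \<omega>) 0 t) \<le> (l1 + \<delta>)*t" using H g by (simp add: rt_simps)
    have L: "real (Nlt (gw \<omega>) 0 t) \<ge> (l1 - \<delta>)*t" using H g f0 by (simp add: rt_simps)
    have t: "t > 0" "\<bar>real_of_int (fst x0)\<bar> \<le> \<delta>*t" using H by auto
    have le: "real (Nlt (gw \<omega>) 0 t) \<le> real (Nle (gw \<omega>) 0 t)" using Nlt_le[OF f0] by simp
    have D: "real_of_int (fst (cascade_state x0 (gw \<omega>) t)) = real_of_int (fst x0) + real (Nle (gw \<omega>) 0 t)"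
      using D1[OF g fn, of x0] by simp
    have "\<bar>real_of_int (fst (cascade_state x0 (gw \<omega>) t)) - l1*t\<bar> \<le> \<epsilon>*t"
      unfolding D using U L le t by (simp add: \<delta>_def abs_le_iff algebra_simps) linarith
    then show "\<bar>real_of_int (fst (cascade_state x0 (gw \<omega>) t)) / t - l1\<bar> \<le> \<epsilon>"
      using t(1) by (rule num_div[rotated])
  qed
  then show "whp M (\<lambda>t \<omega>. \<bar>real_of_int (fst (cascade_state x0 (gw \<omega>) t)) / t - l1\<bar> \<le> \<epsilon>)"
    by (rule whp_AE[OF AE_good])
qed

end

lemma grid_bound:
  assumes g: "goodg g" and fn: "fin g t" and J: "J > (0::nat)"
    and gl: "\<And>j. j < J \<Longrightarrow> real (Nlt g 0 (real j / J * t)) \<ge> (real j / J * l1 - \<delta>)*t"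
    and gu: "\<And>j. j < J \<Longrightarrow> real (Nle g 1 (real (Suc j) / J * t)) \<le> (real (Suc j) / J * l2 + \<delta>)*t"
    and s: "0 < \<sigma>" "\<sigma> \<le> t"
  shows "\<exists>j<J. real (Nlt g 0 \<sigma>) \<ge> (real j / J * l1 - \<delta>)*t \<and> real (Nle g 1 \<sigma>) \<le> (real (Suc j) / J * l2 + \<delta>)*t"
proof -
  obtain j where j: "j < J" "real j / J * t \<le> \<sigma>" "\<sigma> \<le> real (Suc j) / J * t"
    using discr[OF s J] by blast
  have t: "t > 0" using s by simp
  have f0: "finite {n. flow_point g 0 n \<le> t}" "finite {n. flow_point g 1 n \<le> t}" using fn by (auto simp: fin_def)
  have "real (Suc j) / J \<le> 1" using j(1) by simp
  then have "real (Suc j) / J * t \<le> 1 * t" using t by (intro mult_right_mono) auto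
  then have le: "real (Suc j) / J * t \<le> t" by simp
  have "Nlt g 0 (real j / J * t) \<le> Nlt g 0 \<sigma>"
    by (rule Nlt_mono[OF j(2)]) (rule fin_sub[OF f0(1)], use s in simp)
  moreover have "Nle g 1 \<sigma> \<le> Nle g 1 (real (Suc j) / J * t)"
    by (rule Nle_mono[OF j(3)]) (rule fin_sub[OF f0(2) le])
  ultimately show ?thesis using gl[OF j(1)] gu[OF j(1)] j(1)
    by (intro exI[of _ j]) (auto intro: order_trans)
qed

context casc
begin

lemma whp_grid:
  assumes J: "J > (0::nat)" and d: "\<delta> > 0"
  shows "whp M (\<lambda>t \<omega>. \<forall>j<J.
     (goodg (gw \<omega>) \<and> finite {n. flow_point (gw \<omega>) 0 n \<le> real j / J * t} \<longrightarrow> real (Nlt (gw \<omega>) 0 (real j / J * t)) \<ge> (real j / J * rt 0 - \<delta>)*t) \<and>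
     (goodg (gw \<omega>) \<longrightarrow> finite {n. flow_point (gw \<omega>) 1 n \<le> real (Suc j) / J * t} \<and> real (Nle (gw \<omega>) 1 (real (Suc j) / J * t)) \<le> (real (Suc j) / J * rt 1 + \<delta>)*t))"
  by (intro whp_all whp_conj whp_L whp_U d) auto

lemma grid_apply:
  assumes J: "J > (0::nat)" and g: "goodg (gw \<omega>)" and fn: "fin (gw \<omega>) t" and t: "t > 0"
    and H: "\<forall>j<J.
     (goodg (gw \<omega>) \<and> finite {n. flow_point (gw \<omega>) 0 n \<le> real j / J * t} \<longrightarrow> real (Nlt (gw \<omega>) 0 (real j / J * t)) \<ge> (real j / J * rt 0 - \<delta>)*t) \<and>
     (goodg (gw \<omega>) \<longrightarrow> finite {n. flow_point (gw \<omega>) 1 n \<le> real (Suc j) / J * t} \<and> real (Nle (gw \<omega>) 1 (real (Suc j) / J * t)) \<le> (real (Suc j) / J * rt 1 + \<delta>)*t)"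
    and s: "flow_point (gw \<omega>) 2 n \<le> t"
  shows "\<exists>j<J. real (Nlt (gw \<omega>) 0 (flow_point (gw \<omega>) 2 n)) \<ge> (real j / J * l1 - \<delta>)*t \<and>
              real (Nle (gw \<omega>) 1 (flow_point (gw \<omega>) 2 n)) \<le> (real (Suc j) / J * l2 + \<delta>)*t"
proof (rule grid_bound[OF g fn J])
  fix j assume j: "j < J"
  have f0: "finite {n. flow_point (gw \<omega>) 0 n \<le> t}" using fn by (simp add: fin_def)
  have "real j / J \<le> 1" using j by simp
  then have "real j / J * t \<le> 1 * t" using t by (intro mult_right_mono) auto
  then have "real j / J * t \<le> t" by simp
  then have "finite {n. flow_point (gw \<omega>) 0 n \<le> real j / J * t}" by (rule fin_sub[OF f0])
  then show "real (Nlt (gw \<omega>) 0 (real j / J * t)) \<ge> (real j / J * l1 - \<delta>)*t"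
    using H j g by (simp add: rt_simps)
  show "real (Nle (gw \<omega>) 1 (real (Suc j) / J * t)) \<le> (real (Suc j) / J * l2 + \<delta>)*t"
    using H j g by (simp add: rt_simps)
next
  show "0 < flow_point (gw \<omega>) 2 n" by (rule fp_pos[OF g]) simp
qed (rule s)

end

lemma arith_B:
  fixes x N0 N1 N1s a a' l1 l2 \<delta> t w :: real
  assumes "x \<ge> -(\<delta>*t)" "N0 \<ge> (a*l1 - \<delta>)*t" "N1 \<ge> (l2 - \<delta>)*t" "N1s \<le> (a'*l2 + \<delta>)*t"
    "a*l1 - a'*l2 \<ge> w" "t > 0"
  shows "x + N0 + N1 - N1s \<ge> (w + l2 - 4*\<delta>)*t"
proof -
  have "(a*l1 - a'*l2)*t \<ge> w*t" using assms by (intro mult_right_mono) auto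
  moreover have "(a*l1 - \<delta>)*t + (l2 - \<delta>)*t - (a'*l2 + \<delta>)*t - \<delta>*t = (a*l1 - a'*l2)*t + (l2 - 4*\<delta>)*t"
    by (simp add: algebra_simps)
  moreover have "(w + l2 - 4*\<delta>)*t = w*t + (l2 - 4*\<delta>)*t" by (simp add: algebra_simps)
  ultimately show ?thesis using assms by linarith
qed

lemma w_gt:
  fixes a a' l1 l2 \<delta> J :: real
  assumes "a \<ge> 0" "l1 > l2" "a' = a + 1/J" "l2/J \<le> \<delta>"
  shows "a*l1 - a'*l2 \<ge> -\<delta>"
proof -
  have "a'*l2 = a*l2 + l2/J" unfolding assms(3) by (simp add: distrib_right)
  moreover have "a*(l1 - l2) = a*l1 - a*l2" by (simp add: right_diff_distrib)
  moreover have "a*(l1 - l2) \<ge> 0" using assms by simp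
  ultimately show ?thesis using assms(4) by linarith
qed

lemma w_lt:
  fixes a a' l1 l2 \<delta> J :: real
  assumes "a' \<le> 1" "l1 < l2" "a' = a + 1/J" "l1/J \<le> \<delta>"
  shows "a*l1 - a'*l2 \<ge> l1 - l2 - \<delta>"
proof -
  have "a'*l1 = a*l1 + l1/J" unfolding assms(3) by (simp add: distrib_right)
  moreover have "(1 - a')*(l2 - l1) = l2 - l1 - a'*l2 + a'*l1" by (simp add: algebra_simps)
  moreover have "(1 - a')*(l2 - l1) \<ge> 0" using assms by simp
  ultimately show ?thesis using assms(4) by linarith
qed

lemma J_bound:
  fixes l1 l2 \<delta> :: real
  assumes "\<delta> > 0" "l1 > 0" "l2 > 0"
  defines "J \<equiv> nat \<lceil>(l1+l2)/\<delta>\<rceil> + 1"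
  shows "J > 0" "l1/J \<le> \<delta>" "l2/J \<le> \<delta>"
proof -
  show "J > 0" by (simp add: J_def)
  have "(l1+l2)/\<delta> \<le> real J" unfolding J_def by linarith
  then have "l1 + l2 \<le> \<delta> * J" using assms(1) by (simp add: field_simps)
  moreover have Jp: "real J > 0" by (simp add: J_def)
  ultimately show "l1/J \<le> \<delta>" "l2/J \<le> \<delta>" using assms(2,3)
    by (simp_all add: pos_divide_le_eq[OF Jp] mult.commute)
qed

context casc
begin

lemma conv_snd_gt:
  assumes gt: "l1 > l2"
  shows "conv_in_prob M (\<lambda>t \<omega>. real_of_int (snd (cascade_state x0 (gw \<omega>) t)) / t) l2"
proof (rule whp_conv)
  fix \<epsilon> :: real assume e: "\<epsilon> > 0"
  define \<delta> where "\<delta> = \<epsilon>/5"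
  have d: "\<delta> > 0" using e by (simp add: \<delta>_def)
  define J where "J = nat \<lceil>(l1+l2)/\<delta>\<rceil> + 1"
  have J: "J > 0" "l1/J \<le> \<delta>" "l2/J \<le> \<delta>" using J_bound[OF d l1 l2] by (simp_all add: J_def)
  have W: "whp M (\<lambda>t \<omega>. (goodg (gw \<omega>) \<longrightarrow> fin (gw \<omega>) t) \<and>
     ((goodg (gw \<omega>) \<longrightarrow> finite {n. flow_point (gw \<omega>) 1 n \<le> 1*t} \<and> real (Nle (gw \<omega>) 1 (1*t)) \<le> (1 * rt 1 + \<delta>)*t) \<and>
     ((goodg (gw \<omega>) \<and> finite {n. flow_point (gw \<omega>) 1 n \<le> 1*t} \<longrightarrow> real (Nlt (gw \<omega>) 1 (1*t)) \<ge> (1 * rt 1 - \<delta>)*t) \<and>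
     ((\<forall>j<J.
     (goodg (gw \<omega>) \<and> finite {n. flow_point (gw \<omega>) 0 n \<le> real j / J * t} \<longrightarrow> real (Nlt (gw \<omega>) 0 (real j / J * t)) \<ge> (real j / J * rt 0 - \<delta>)*t) \<and>
     (goodg (gw \<omega>) \<longrightarrow> finite {n. flow_point (gw \<omega>) 1 n \<le> real (Suc j) / J * t} \<and> real (Nle (gw \<omega>) 1 (real (Suc j) / J * t)) \<le> (real (Suc j) / J * rt 1 + \<delta>)*t)) \<and>
     (t > 0 \<and> \<bar>real_of_int (fst x0)\<bar> \<le> \<delta>*t \<and> \<bar>real_of_int (snd x0)\<bar> \<le> \<delta>*t)))))"
    by (intro whp_conj fin_whp whp_U whp_L whp_grid whp_ev ev_lin d J) auto
  have "whp M (\<lambda>t \<omega>. goodg (gw \<omega>) \<longrightarrow> \<bar>real_of_int (snd (cascade_state x0 (gw \<omega>) t)) / t - l2\<bar> \<le> \<epsilon>)"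
  proof (rule whp_mono[OF W], goal_cases)
    case (1 t \<omega>)
    show ?case
    proof
      assume g: "goodg (gw \<omega>)"
      have fn: "fin (gw \<omega>) t" using 1 g by blast
      have f1: "finite {n. flow_point (gw \<omega>) 1 n \<le> t}" using fn by (simp add: fin_def)
      have U1: "real (Nle (gw \<omega>) 1 t) \<le> (l2 + \<delta>)*t" using 1 g by (simp add: rt_simps)
      have L1: "real (Nlt (gw \<omega>) 1 t) \<ge> (l2 - \<delta>)*t" using 1 g f1 by (simp add: rt_simps)
      have le1: "real (Nlt (gw \<omega>) 1 t) \<le> real (Nle (gw \<omega>) 1 t)" using Nlt_le[OF f1] by simp
      have t: "t > 0" "\<bar>real_of_int (fst x0)\<bar> \<le> \<delta>*t" "\<bar>real_of_int (snd x0)\<bar> \<le> \<delta>*t" using 1 by auto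
      have H: "\<forall>j<J.
     (goodg (gw \<omega>) \<and> finite {n. flow_point (gw \<omega>) 0 n \<le> real j / J * t} \<longrightarrow> real (Nlt (gw \<omega>) 0 (real j / J * t)) \<ge> (real j / J * rt 0 - \<delta>)*t) \<and>
     (goodg (gw \<omega>) \<longrightarrow> finite {n. flow_point (gw \<omega>) 1 n \<le> real (Suc j) / J * t} \<and> real (Nle (gw \<omega>) 1 (real (Suc j) / J * t)) \<le> (real (Suc j) / J * rt 1 + \<delta>)*t)"
        using 1 by blast
      have up: "real_of_int (snd (cascade_state x0 (gw \<omega>) t)) \<le> (l2 + 2*\<delta>)*t"
      proof -
        have "real_of_int (snd (cascade_state x0 (gw \<omega>) t)) \<le> real_of_int (snd x0) + real (Nle (gw \<omega>) 1 t)"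
          using D2[OF g fn, of x0] by linarith
        then show ?thesis using U1 t by (simp add: algebra_simps)
      qed
      have low: "real_of_int (snd (cascade_state x0 (gw \<omega>) t)) \<ge> (l2 - \<epsilon>)*t"
      proof -
        have "snd (cascade_state x0 (gw \<omega>) t) \<ge> \<lceil>(l2 - \<epsilon>)*t\<rceil>"
        proof (rule D3[OF g fn])
          have "real_of_int (snd x0) + real (Nle (gw \<omega>) 1 t) \<ge> (l2 - \<epsilon>)*t"
            using L1 le1 t unfolding \<delta>_def by (simp add: algebra_simps)
          then show "snd x0 + int (Nle (gw \<omega>) 1 t) \<ge> \<lceil>(l2 - \<epsilon>)*t\<rceil>" by (simp add: ceiling_le_iff)
        next
          fix n assume n: "flow_point (gw \<omega>) 2 n \<le> t"
          obtain j where j: "j < J" "real (Nlt (gw \<omega>) 0 (flow_point (gw \<omega>) 2 n)) \<ge> (real j / J * l1 - \<delta>)*t"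
              "real (Nle (gw \<omega>) 1 (flow_point (gw \<omega>) 2 n)) \<le> (real (Suc j) / J * l2 + \<delta>)*t"
            using grid_apply[OF J(1) g fn t(1) H n] by blast
          have w: "real j / J * l1 - real (Suc j) / J * l2 \<ge> -\<delta>"
            by (rule w_gt[OF _ gt _ J(3)]) (simp_all add: add_divide_distrib)
          have x10: "real_of_int (fst x0) \<ge> -(\<delta>*t)" using t by linarith
          have "real_of_int (fst x0) + real (Nlt (gw \<omega>) 0 (flow_point (gw \<omega>) 2 n)) + real (Nle (gw \<omega>) 1 t)
                 - real (Nle (gw \<omega>) 1 (flow_point (gw \<omega>) 2 n)) \<ge> (-\<delta> + l2 - 4*\<delta>)*t"
            by (rule arith_B[OF x10 j(2) _ j(3) w t(1)]) (use L1 le1 in linarith)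
          then have "real_of_int (fst x0) + real (Nlt (gw \<omega>) 0 (flow_point (gw \<omega>) 2 n)) + real (Nle (gw \<omega>) 1 t)
                 - real (Nle (gw \<omega>) 1 (flow_point (gw \<omega>) 2 n)) \<ge> (l2 - \<epsilon>)*t"
            unfolding \<delta>_def by (simp add: algebra_simps)
          then show "fst x0 + int (Nlt (gw \<omega>) 0 (flow_point (gw \<omega>) 2 n)) + int (Nle (gw \<omega>) 1 t) -
             int (Nle (gw \<omega>) 1 (flow_point (gw \<omega>) 2 n)) \<ge> \<lceil>(l2 - \<epsilon>)*t\<rceil>"
            by (simp add: ceiling_le_iff)
        qed
        then show ?thesis by (simp add: ceiling_le_iff)
      qed
      have "\<bar>real_of_int (snd (cascade_state x0 (gw \<omega>) t)) - l2*t\<bar> \<le> \<epsilon>*t"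
        using up low d t unfolding \<delta>_def by (simp add: abs_le_iff algebra_simps)
      then show "\<bar>real_of_int (snd (cascade_state x0 (gw \<omega>) t)) / t - l2\<bar> \<le> \<epsilon>"
        using t(1) by (rule num_div[rotated])
    qed
  qed
  then show "whp M (\<lambda>t \<omega>. \<bar>real_of_int (snd (cascade_state x0 (gw \<omega>) t)) / t - l2\<bar> \<le> \<epsilon>)"
    by (rule whp_AE[OF AE_good])
qed

end

context casc
begin

lemma conv_snd_lt:
  assumes lt: "l1 < l2"
  shows "conv_in_prob M (\<lambda>t \<omega>. real_of_int (snd (cascade_state x0 (gw \<omega>) t)) / t) l1"
proof (rule whp_conv)
  fix \<epsilon> :: real assume e: "\<epsilon> > 0"
  define \<delta> where "\<delta> = \<epsilon>/5"
  have d: "\<delta> > 0" using e by (simp add: \<delta>_def)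
  define J where "J = nat \<lceil>(l1+l2)/\<delta>\<rceil> + 1"
  have J: "J > 0" "l1/J \<le> \<delta>" "l2/J \<le> \<delta>" using J_bound[OF d l1 l2] by (simp_all add: J_def)
  define c' where "c' = 1 - 1/real J"
  have c': "c' \<ge> 0" "c' \<le> 1" using J(1) by (auto simp: c'_def)
  define \<delta>' where "\<delta>' = b/(4*J)"
  have d': "\<delta>' > 0" using b J(1) by (simp add: \<delta>'_def)
  have W: "whp M (\<lambda>t \<omega>. (goodg (gw \<omega>) \<longrightarrow> fin (gw \<omega>) t) \<and>
     ((goodg (gw \<omega>) \<longrightarrow> finite {n. flow_point (gw \<omega>) 1 n \<le> 1*t} \<and> real (Nle (gw \<omega>) 1 (1*t)) \<le> (1 * rt 1 + \<delta>)*t) \<and>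
     ((goodg (gw \<omega>) \<and> finite {n. flow_point (gw \<omega>) 1 n \<le> 1*t} \<longrightarrow> real (Nlt (gw \<omega>) 1 (1*t)) \<ge> (1 * rt 1 - \<delta>)*t) \<and>
     ((\<forall>j<J.
     (goodg (gw \<omega>) \<and> finite {n. flow_point (gw \<omega>) 0 n \<le> real j / J * t} \<longrightarrow> real (Nlt (gw \<omega>) 0 (real j / J * t)) \<ge> (real j / J * rt 0 - \<delta>)*t) \<and>
     (goodg (gw \<omega>) \<longrightarrow> finite {n. flow_point (gw \<omega>) 1 n \<le> real (Suc j) / J * t} \<and> real (Nle (gw \<omega>) 1 (real (Suc j) / J * t)) \<le> (real (Suc j) / J * rt 1 + \<delta>)*t)) \<and>
     ((t > 0 \<and> \<bar>real_of_int (fst x0)\<bar> \<le> \<delta>*t \<and> \<bar>real_of_int (snd x0)\<bar> \<le> \<delta>*t) \<and>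
     ((goodg (gw \<omega>) \<longrightarrow> finite {n. flow_point (gw \<omega>) 0 n \<le> 1*t} \<and> real (Nle (gw \<omega>) 0 (1*t)) \<le> (1 * rt 0 + \<delta>)*t) \<and>
     ((goodg (gw \<omega>) \<and> finite {n. flow_point (gw \<omega>) 1 n \<le> c'*t} \<longrightarrow> real (Nlt (gw \<omega>) 1 (c'*t)) \<ge> (c' * rt 1 - \<delta>)*t) \<and>
     ((goodg (gw \<omega>) \<and> finite {n. flow_point (gw \<omega>) 2 n \<le> 1*t} \<longrightarrow> real (Nlt (gw \<omega>) 2 (1*t)) \<ge> (1 * rt 2 - \<delta>')*t) \<and>
     (goodg (gw \<omega>) \<longrightarrow> finite {n. flow_point (gw \<omega>) 2 n \<le> c'*t} \<and> real (Nle (gw \<omega>) 2 (c'*t)) \<le> (c' * rt 2 + \<delta>')*t)))))))))"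
    by (intro whp_conj fin_whp whp_U whp_L whp_grid whp_ev ev_lin d d' J c') auto
  have "whp M (\<lambda>t \<omega>. goodg (gw \<omega>) \<longrightarrow> \<bar>real_of_int (snd (cascade_state x0 (gw \<omega>) t)) / t - l1\<bar> \<le> \<epsilon>)"
  proof (rule whp_mono[OF W], goal_cases)
    case (1 t \<omega>)
    show ?case
    proof
      assume g: "goodg (gw \<omega>)"
      have fn: "fin (gw \<omega>) t" using 1 g by blast
      have f0: "finite {n. flow_point (gw \<omega>) 0 n \<le> t}" "finite {n. flow_point (gw \<omega>) 1 n \<le> t}"
          "finite {n. flow_point (gw \<omega>) 2 n \<le> t}" using fn by (auto simp: fin_def)
      have t: "t > 0" "\<bar>real_of_int (fst x0)\<bar> \<le> \<delta>*t" "\<bar>real_of_int (snd x0)\<bar> \<le> \<delta>*t" using 1 by auto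
      have ct: "c'*t \<le> t" using c' t by (simp add: mult_le_cancel_right1)
      have fc: "finite {n. flow_point (gw \<omega>) 1 n \<le> c'*t}" "finite {n. flow_point (gw \<omega>) 2 n \<le> c'*t}"
        using fin_sub[OF f0(2) ct] fin_sub[OF f0(3) ct] by auto
      have U0: "real (Nle (gw \<omega>) 0 t) \<le> (l1 + \<delta>)*t" using 1 g by (simp add: rt_simps)
      have U1: "real (Nle (gw \<omega>) 1 t) \<le> (l2 + \<delta>)*t" using 1 g by (simp add: rt_simps)
      have L1: "real (Nlt (gw \<omega>) 1 t) \<ge> (l2 - \<delta>)*t" using 1 g f0 by (simp add: rt_simps)
      have L1h: "real (Nlt (gw \<omega>) 1 (c'*t)) \<ge> (c' * l2 - \<delta>)*t" using 1 g fc by (simp add: rt_simps)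
      have L2: "real (Nlt (gw \<omega>) 2 t) \<ge> (b - \<delta>')*t" using 1 g f0 by (simp add: rt_simps)
      have U2h: "real (Nle (gw \<omega>) 2 (c'*t)) \<le> (c' * b + \<delta>')*t" using 1 g by (simp add: rt_simps)
      have le1: "real (Nlt (gw \<omega>) 1 t) \<le> real (Nle (gw \<omega>) 1 t)" using Nlt_le[OF f0(2)] by simp
      have le2: "Nlt (gw \<omega>) 2 t \<le> Nle (gw \<omega>) 2 t" using Nlt_le[OF f0(3)] by simp
      have le2h: "Nlt (gw \<omega>) 2 (c'*t) \<le> Nle (gw \<omega>) 2 (c'*t)" using Nlt_le[OF fc(2)] by simp
      have H: "\<forall>j<J.
     (goodg (gw \<omega>) \<and> finite {n. flow_point (gw \<omega>) 0 n \<le> real j / J * t} \<longrightarrow> real (Nlt (gw \<omega>) 0 (real j / J * t)) \<ge> (real j / J * rt 0 - \<delta>)*t) \<and>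
     (goodg (gw \<omega>) \<longrightarrow> finite {n. flow_point (gw \<omega>) 1 n \<le> real (Suc j) / J * t} \<and> real (Nle (gw \<omega>) 1 (real (Suc j) / J * t)) \<le> (real (Suc j) / J * rt 1 + \<delta>)*t)"
        using 1 by blast
      have up: "real_of_int (snd (cascade_state x0 (gw \<omega>) t)) \<le> (l1 + \<epsilon>)*t"
      proof -
        have "(c' * b + \<delta>')*t < (b - \<delta>')*t"
        proof -
          have "(b - \<delta>') - (c' * b + \<delta>') = b/(2*J)" using J(1) by (simp add: c'_def \<delta>'_def field_simps)
          moreover have "b/(2*J) > 0" using b J(1) by simp
          ultimately have "c' * b + \<delta>' < b - \<delta>'" by linarith
          then show ?thesis using t(1) by simp
        qed
        then have "Nlt (gw \<omega>) 2 (c'*t) < Nle (gw \<omega>) 2 t" using L2 U2h le2 le2h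
          by (smt (verit) of_nat_le_iff of_nat_less_iff)
        then obtain n where n: "flow_point (gw \<omega>) 2 n \<le> t" "\<not> flow_point (gw \<omega>) 2 n < c'*t"
          using exists_between[OF fin_sub_lt[OF f0(2) ct]] exists_between[OF fin_sub_lt[OF f0(3) ct]] by blast
        have "Nlt (gw \<omega>) 1 (c'*t) \<le> Nlt (gw \<omega>) 1 (flow_point (gw \<omega>) 2 n)"
          by (rule Nlt_mono) (use n fin_sub[OF f0(2) n(1)] in auto)
        moreover have "snd (cascade_state x0 (gw \<omega>) t) \<le> fst x0 + int (Nle (gw \<omega>) 0 t) + int (Nle (gw \<omega>) 1 t) - int (Nlt (gw \<omega>) 1 (flow_point (gw \<omega>) 2 n))"
          by (rule D4[OF g fn n(1)])
        ultimately have "real_of_int (snd (cascade_state x0 (gw \<omega>) t)) \<le> real_of_int (fst x0) + real (Nle (gw \<omega>) 0 t) + real (Nle (gw \<omega>) 1 t) - real (Nlt (gw \<omega>) 1 (c'*t))"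
          by linarith
        also have "\<dots> \<le> \<delta>*t + (l1 + \<delta>)*t + (l2 + \<delta>)*t - (c' * l2 - \<delta>)*t"
          using t U0 U1 L1h by linarith
        also have "\<dots> = (l1 + 4*\<delta> + l2/J)*t" by (simp add: c'_def algebra_simps)
        also have "\<dots> \<le> (l1 + 5*\<delta>)*t" using J(3) t(1) by (intro mult_right_mono) auto
        finally show ?thesis by (simp add: \<delta>_def)
      qed
      have low: "real_of_int (snd (cascade_state x0 (gw \<omega>) t)) \<ge> (l1 - \<epsilon>)*t"
      proof -
        have "snd (cascade_state x0 (gw \<omega>) t) \<ge> \<lceil>(l1 - \<epsilon>)*t\<rceil>"
        proof (rule D3[OF g fn])
          have "(l1 - \<epsilon>)*t \<le> (l2 - \<epsilon>)*t" using lt t(1) by (intro mult_right_mono) auto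
          moreover have "real_of_int (snd x0) + real (Nle (gw \<omega>) 1 t) \<ge> (l2 - \<epsilon>)*t"
            using L1 le1 t unfolding \<delta>_def by (simp add: algebra_simps)
          ultimately have "real_of_int (snd x0) + real (Nle (gw \<omega>) 1 t) \<ge> (l1 - \<epsilon>)*t" by linarith
          then show "snd x0 + int (Nle (gw \<omega>) 1 t) \<ge> \<lceil>(l1 - \<epsilon>)*t\<rceil>" by (simp add: ceiling_le_iff)
        next
          fix n assume n: "flow_point (gw \<omega>) 2 n \<le> t"
          obtain j where j: "j < J" "real (Nlt (gw \<omega>) 0 (flow_point (gw \<omega>) 2 n)) \<ge> (real j / J * l1 - \<delta>)*t"
              "real (Nle (gw \<omega>) 1 (flow_point (gw \<omega>) 2 n)) \<le> (real (Suc j) / J * l2 + \<delta>)*t"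
            using grid_apply[OF J(1) g fn t(1) H n] by blast
          have w: "real j / J * l1 - real (Suc j) / J * l2 \<ge> l1 - l2 - \<delta>"
          proof (rule w_lt[OF _ lt _ J(2)])
            show "real (Suc j) / J \<le> 1" using j(1) by simp
          qed (simp add: add_divide_distrib)
          have x10: "real_of_int (fst x0) \<ge> -(\<delta>*t)" using t by linarith
          have "real_of_int (fst x0) + real (Nlt (gw \<omega>) 0 (flow_point (gw \<omega>) 2 n)) + real (Nle (gw \<omega>) 1 t)
                 - real (Nle (gw \<omega>) 1 (flow_point (gw \<omega>) 2 n)) \<ge> ((l1 - l2 - \<delta>) + l2 - 4*\<delta>)*t"
            by (rule arith_B[OF x10 j(2) _ j(3) w t(1)]) (use L1 le1 in linarith)
          then have "real_of_int (fst x0) + real (Nlt (gw \<omega>) 0 (flow_point (gw \<omega>) 2 n)) + real (Nle (gw \<omega>) 1 t)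
                 - real (Nle (gw \<omega>) 1 (flow_point (gw \<omega>) 2 n)) \<ge> (l1 - \<epsilon>)*t"
            unfolding \<delta>_def by (simp add: algebra_simps)
          then show "fst x0 + int (Nlt (gw \<omega>) 0 (flow_point (gw \<omega>) 2 n)) + int (Nle (gw \<omega>) 1 t) -
             int (Nle (gw \<omega>) 1 (flow_point (gw \<omega>) 2 n)) \<ge> \<lceil>(l1 - \<epsilon>)*t\<rceil>"
            by (simp add: ceiling_le_iff)
        qed
        then show ?thesis by (simp add: ceiling_le_iff)
      qed
      have "\<bar>real_of_int (snd (cascade_state x0 (gw \<omega>) t)) - l1*t\<bar> \<le> \<epsilon>*t"
        using up low by (simp add: abs_le_iff algebra_simps)
      then show "\<bar>real_of_int (snd (cascade_state x0 (gw \<omega>) t)) / t - l1\<bar> \<le> \<epsilon>"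
        using t(1) by (rule num_div[rotated])
    qed
  qed
  then show "whp M (\<lambda>t \<omega>. \<bar>real_of_int (snd (cascade_state x0 (gw \<omega>) t)) / t - l1\<bar> \<le> \<epsilon>)"
    by (rule whp_AE[OF AE_good])
qed

end

theorem theorem2:
  fixes M :: "'a measure"
    and G :: "nat \<Rightarrow> nat \<Rightarrow> 'a \<Rightarrow> real"
    and l1 l2 b :: real
    and x0 :: "int \<times> int"
  assumes "prob_space M"
    and "l1 > 0" and "l2 > 0" and "b > 0"
    and "prob_space.indep_vars M (\<lambda>_. borel) (\<lambda>(k, n). G k n) ({..<3} \<times> UNIV)"
    and "\<And>k n. k < 3 \<Longrightarrow>
           distributed M lborel (G k n) (\<lambda>s. ennreal (exponential_density (flow_rate l1 l2 b k) s))"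
  shows "(l1 < l2 \<longrightarrow>
            ergodic_chain (Y_kernel l1 l2 b)
          \<and> conv_in_prob M (\<lambda>t \<omega>. real_of_int (fst (cascade_state x0 (\<lambda>k n. G k n \<omega>) t)) / t) l1
          \<and> conv_in_prob M (\<lambda>t \<omega>. real_of_int (snd (cascade_state x0 (\<lambda>k n. G k n \<omega>) t)) / t) l1)
       \<and> (l1 > l2 \<longrightarrow>
            transient_chain (Y_kernel l1 l2 b)
          \<and> conv_in_prob M (\<lambda>t \<omega>. real_of_int (fst (cascade_state x0 (\<lambda>k n. G k n \<omega>) t)) / t) l1
          \<and> conv_in_prob M (\<lambda>t \<omega>. real_of_int (snd (cascade_state x0 (\<lambda>k n. G k n \<omega>) t)) / t) l2)"
proof -
  interpret casc M G l1 l2 b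
    by (rule casc.intro[OF assms(1)], rule casc_axioms.intro) (rule assms(2-6); assumption)+
  have A: "l1 < l2 \<longrightarrow> ergodic_chain (Y_kernel l1 l2 b)" using ergodic_Y[OF assms(2,3,4)] by blast
  have B: "l2 < l1 \<longrightarrow> transient_chain (Y_kernel l1 l2 b)" using transient_Y[OF assms(2,3,4)] by blast
  have C: "l1 < l2 \<longrightarrow> conv_in_prob M (\<lambda>t \<omega>. real_of_int (snd (cascade_state x0 (\<lambda>k n. G k n \<omega>) t)) / t) l1"
    using conv_snd_lt[of x0] by blast
  have D: "l2 < l1 \<longrightarrow> conv_in_prob M (\<lambda>t \<omega>. real_of_int (snd (cascade_state x0 (\<lambda>k n. G k n \<omega>) t)) / t) l2"
    using conv_snd_gt[of x0] by blast
  show ?thesis using A B C D conv_fst[of x0] by simp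
qed

end
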